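(* Let $\Delta_{-1}=\sum_{i=1}^n\sum_{s\ge1}(u^i-\lambda)f^i\,\theta_i^{s+1}\frac{\partial}{\partial u^{i,s}}$, a differential on $\hat{\mathcal A}[\lambda]$. Every element of $\hat{\mathcal C}[\lambda]$ and every element of $\hat d_i(\hat{\mathcal C}_i)\subset\hat{\mathcal A}$ ($i=1,\dots,n$) is a $\Delta_{-1}$-cocycle, and the inclusion of $\hat{\mathcal C}[\lambda]\oplus\bigoplus_{i=1}^n\hat d_i(\hat{\mathcal C}_i)$ into the cocycles induces an isomorphism $H(\hat{\mathcal A}[\lambda],\Delta_{-1})\cong\hat{\mathcal C}[\lambda]\oplus\bigoplus_{i=1}^n\operatorname{im}\big(\hat d_i:\hat{\mathcal C}_i\to\hat{\mathcal C}_i\big).$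
   Context: Let $n\ge1$, $U\subset\mathbb R^n$ a domain with coordinates $u^1,\dots,u^n$ with $u^i\neq u^j$ on $U$ for $i\ne j$, and $f^1,\dots,f^n$ smooth nowhere-vanishing functions on $U$. Let $\hat{\mathcal A}=C^\infty(U)[[u^{i,s}\ (1\le i\le n,\ s\ge1);\ \theta_i^s\ (1\le i\le n,\ s\ge0)]]$ with $u^{i,s}$ even and $\theta_i^s$ odd formal variables, graded by the standard degree $\deg u^{i,s}=\deg\theta_i^s=s$ (functions on $U$ of degree 0), and let $\hat{\mathcal A}[\lambda]$ be polynomials in an even formal variable $\lambda$ with coefficients in $\hat{\mathcal A}$. Define $\hat{\mathcal C}=C^\infty(U)[[\theta_1^0,\dots,\theta_n^0,\theta_1^1,\dots,\theta_n^1]]\subset\hat{\mathcal A}$ and, for each $i$, $\hat{\mathcal C}_i=\hat{\mathcal C}[[u^{i,s},\theta_i^{s+1}:s\ge1]]\subset\hat{\mathcal A}$ (only the variables with this fixed index $i$ are adjoined). On $\hat{\mathcal C}_i$ let $\hat d_i=\sum_{s\ge1}\theta_i^{s+1}\frac{\partial}{\partial u^{i,s}}$. *)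

theory Defs
  imports "HOL-Analysis.Analysis" "HOL-Library.Multiset"
begin

fun Ck_on :: "nat \<Rightarrow> (real^'n) set \<Rightarrow> (real^'n \<Rightarrow> real) \<Rightarrow> bool" where
  "Ck_on 0 U g = continuous_on U g"
| "Ck_on (Suc k) U g = (g differentiable_on U \<and> continuous_on U g \<and>
      (\<forall>j. Ck_on k U (\<lambda>x. frechet_derivative g (at x) (axis j 1))))"

definition smooth_on :: "(real^'n) set \<Rightarrow> (real^'n \<Rightarrow> real) \<Rightarrow> bool" where
  "smooth_on U g \<longleftrightarrow> (\<forall>k. Ck_on k U g)"

text \<open>A monomial of A[lambda]: a power of lambda, a multiset of even variables
  u^{i,s} (encoded as (i,s), s >= 1) and a finite set of odd variables theta_i^s
  (encoded as (i,s), s >= 0), the odd ones written as an ordered product in increasing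
  lexicographic order of (i,s).\<close>
type_synonym 'n mono = "nat \<times> ('n \<times> nat) multiset \<times> ('n \<times> nat) set"

definition mlam :: "'n mono \<Rightarrow> nat" where "mlam x = fst x"
definition mev :: "'n mono \<Rightarrow> ('n \<times> nat) multiset" where "mev x = fst (snd x)"
definition mth :: "'n mono \<Rightarrow> ('n \<times> nat) set" where "mth x = snd (snd x)"

definition valid_mono :: "'n mono \<Rightarrow> bool" where
  "valid_mono x \<longleftrightarrow> (\<forall>v\<in>#mev x. 1 \<le> snd v) \<and> finite (mth x)"

text \<open>Series: coefficient (a function on R^n, relevant on U) of each monomial.\<close>
type_synonym 'n series = "'n mono \<Rightarrow> real^'n \<Rightarrow> real"

definition lexless :: "('n::linorder \<times> nat) \<Rightarrow> ('n \<times> nat) \<Rightarrow> bool" where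
  "lexless a b \<longleftrightarrow> fst a < fst b \<or> (fst a = fst b \<and> snd a < snd b)"

text \<open>The space A[lambda] of polynomials in lambda with coefficients in A,
  coefficients in C^infinity(U) (normalised to vanish off U).\<close>
definition Alam :: "(real^'n) set \<Rightarrow> 'n series set" where
  "Alam U = {F. (\<forall>x. smooth_on U (F x) \<and> (\<forall>p. p \<notin> U \<longrightarrow> F x p = 0))
              \<and> (\<forall>x. \<not> valid_mono x \<longrightarrow> F x = (\<lambda>p. 0))
              \<and> (\<exists>N. \<forall>x. N < mlam x \<longrightarrow> F x = (\<lambda>p. 0))}"

text \<open>Partial derivative with respect to the even variable u^{i,s}.\<close>
definition pd :: "('n \<times> nat) \<Rightarrow> 'n series \<Rightarrow> 'n series" where
  "pd v F x = (\<lambda>p. real (count (mev x) v + 1) * F (mlam x, mev x + {#v#}, mth x) p)"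

text \<open>Left multiplication by the odd variable theta (with Koszul sign).\<close>
definition thmul :: "('n::linorder \<times> nat) \<Rightarrow> 'n series \<Rightarrow> 'n series" where
  "thmul v F x = (if v \<in> mth x
     then (\<lambda>p. (-1) ^ card {a \<in> mth x. lexless a v} * F (mlam x, mev x, mth x - {v}) p)
     else (\<lambda>p. 0))"

definition lammul :: "'n series \<Rightarrow> 'n series" where
  "lammul F x = (if mlam x = 0 then (\<lambda>p. 0) else F (mlam x - 1, mev x, mth x))"

definition funmul :: "(real^'n \<Rightarrow> real) \<Rightarrow> 'n series \<Rightarrow> 'n series" where
  "funmul g F x = (\<lambda>p. g p * F x p)"

definition Dterm :: "('n::{finite,linorder} \<Rightarrow> (real,'n) vec \<Rightarrow> real) \<Rightarrow> 'n \<Rightarrow> nat \<Rightarrow> 'n series \<Rightarrow> 'n series" where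
  "Dterm f i s F x =
     (let G = thmul (i, s+1) (pd (i, s) F)
      in (\<lambda>p. funmul (\<lambda>q. q $ i * f i q) G x p - lammul (funmul (f i) G) x p))"

text \<open>Delta_{-1} = sum_i sum_{s>=1} (u^i - lambda) f^i theta_i^{s+1} d/du^{i,s}; on each
  coefficient only the finitely many s with theta_i^{s+1} in the monomial contribute
  (all other terms vanish identically).\<close>
definition Delta :: "('n::{finite,linorder} \<Rightarrow> (real,'n) vec \<Rightarrow> real) \<Rightarrow> 'n series \<Rightarrow> 'n series" where
  "Delta f F x = (\<lambda>p. \<Sum>i\<in>UNIV. \<Sum>s\<in>{s. 1 \<le> s \<and> (i, s+1) \<in> mth x}. Dterm f i s F x p)"

text \<open>hat d_i = sum_{s>=1} theta_i^{s+1} d/du^{i,s}.\<close>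
definition dhat :: "'n::{finite,linorder} \<Rightarrow> 'n series \<Rightarrow> 'n series" where
  "dhat i F x = (\<lambda>p. \<Sum>s\<in>{s. 1 \<le> s \<and> (i, s+1) \<in> mth x}. thmul (i, s+1) (pd (i, s) F) x p)"

text \<open>hat C[lambda]: series in lambda, theta_j^0, theta_j^1 only.\<close>
definition Clam :: "(real^'n) set \<Rightarrow> 'n series set" where
  "Clam U = {F \<in> Alam U. \<forall>x. F x \<noteq> (\<lambda>p. 0) \<longrightarrow>
      mev x = {#} \<and> mth x \<subseteq> {v. snd v \<le> 1}}"

text \<open>hat C_i: hat C with u^{i,s} (s>=1) and theta_i^{s+1} (s>=1) adjoined; no lambda.\<close>
definition Ci :: "(real^'n) set \<Rightarrow> 'n \<Rightarrow> 'n series set" where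
  "Ci U i = {F \<in> Alam U. \<forall>x. F x \<noteq> (\<lambda>p. 0) \<longrightarrow>
      mlam x = 0 \<and> (\<forall>v\<in>#mev x. fst v = i) \<and>
      mth x \<subseteq> {v. snd v \<le> 1} \<union> {v. fst v = i \<and> 2 \<le> snd v}}"

end

theory Submission
  imports Defs
begin


lemma fd_cong:
  assumes "open U" "x \<in> U" "g differentiable (at x)" "\<And>y. y \<in> U \<Longrightarrow> g y = h y"
  shows "h differentiable (at x) \<and> frechet_derivative h (at x) = frechet_derivative g (at x)"
proof -
  have "(g has_derivative frechet_derivative g (at x)) (at x)"
    using assms(3) frechet_derivative_works by blast
  then have "(h has_derivative frechet_derivative g (at x)) (at x)"
    using has_derivative_transform_within_open[of g _ x UNIV U h] assms by auto
  then show ?thesis using frechet_derivative_at differentiable_def by metis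
qed

lemma Ck_cong:
  assumes "open U" "Ck_on k U g" "\<And>x. x\<in>U \<Longrightarrow> g x = h x" shows "Ck_on k U h"
  using assms(2,3)
proof (induction k arbitrary: g h)
  case 0 then show ?case using continuous_on_cong by (metis Ck_on.simps(1))
next
  case (Suc k)
  have dg: "\<And>x. x \<in> U \<Longrightarrow> g differentiable (at x)"
    using Suc.prems(1) assms(1) differentiable_on_eq_differentiable_at by auto
  have fd: "\<And>x. x \<in> U \<Longrightarrow> h differentiable (at x) \<and> frechet_derivative h (at x) = frechet_derivative g (at x)"
    using fd_cong[OF assms(1) _ dg Suc.prems(2)] by blast
  have "h differentiable_on U" using fd assms(1) differentiable_on_eq_differentiable_at by auto
  moreover have "continuous_on U h" using Suc.prems continuous_on_cong by (metis Ck_on.simps(2))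
  moreover have "Ck_on k U (\<lambda>x. frechet_derivative h (at x) (axis j 1))" for j
    using Suc.IH[of "\<lambda>x. frechet_derivative g (at x) (axis j 1)"] Suc.prems fd by auto
  ultimately show ?case by simp
qed

lemma Ck_Suc_imp: "Ck_on (Suc k) U g \<Longrightarrow> Ck_on k U g"
  by (induction k arbitrary: g) auto


lemma Ck_const: "open U \<Longrightarrow> Ck_on k U (\<lambda>x. c)"
proof (induction k arbitrary: c)
  case 0 then show ?case by simp
next
  case (Suc k)
  have "frechet_derivative (\<lambda>x. c) (at x) = (\<lambda>h. 0)" for x
    using frechet_derivative_at[OF has_derivative_const] by metis
  then show ?case using Suc by simp
qed

lemma Ck_coord: "open U \<Longrightarrow> Ck_on k U (\<lambda>x::real^'n. x $ i)"
proof (induction k)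
  case 0 then show ?case by (simp add: continuous_on_component)
next
  case (Suc k)
  have bl: "bounded_linear (\<lambda>x::real^'n. x $ i)" by (rule bounded_linear_vec_nth)
  have "frechet_derivative (\<lambda>x::real^'n. x $ i) (at x) = (\<lambda>x. x $ i)" for x
    using frechet_derivative_at[OF bounded_linear_imp_has_derivative[OF bl]] by metis
  then show ?case using Suc bl Ck_const[OF Suc.prems]
    by (auto simp: bounded_linear_imp_differentiable_on continuous_on_component)
qed

lemma Ck_add: "open U \<Longrightarrow> Ck_on k U g \<Longrightarrow> Ck_on k U h \<Longrightarrow> Ck_on k U (\<lambda>x. g x + h x)"
proof (induction k arbitrary: g h)
  case 0 then show ?case by (simp add: continuous_on_add)
next
  case (Suc k)
  have d: "\<And>x. x \<in> U \<Longrightarrow> g differentiable (at x) \<and> h differentiable (at x)"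
    using Suc.prems differentiable_on_eq_differentiable_at by auto
  have fd: "frechet_derivative (\<lambda>x. g x + h x) (at x) e = frechet_derivative g (at x) e + frechet_derivative h (at x) e"
    if "x \<in> U" for x e
  proof -
    have "((\<lambda>x. g x + h x) has_derivative (\<lambda>e. frechet_derivative g (at x) e + frechet_derivative h (at x) e)) (at x)"
      using d[OF that] by (intro has_derivative_add) (auto simp: frechet_derivative_works[symmetric])
    from fun_cong[OF frechet_derivative_at[OF this], of e] show ?thesis by simp
  qed
  have "Ck_on k U (\<lambda>x. frechet_derivative g (at x) (axis j 1) + frechet_derivative h (at x) (axis j 1))" for j
    by (rule Suc.IH[OF Suc.prems(1)]) (use Suc.prems(2,3) in simp_all)
  then have "Ck_on k U (\<lambda>x. frechet_derivative (\<lambda>x. g x + h x) (at x) (axis j 1))" for j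
    by (rule Ck_cong[OF Suc.prems(1)]) (simp only: fd)
  moreover have "(\<lambda>x. g x + h x) differentiable_on U" using Suc.prems by simp
  moreover have "continuous_on U (\<lambda>x. g x + h x)" using Suc.prems by (simp add: continuous_on_add)
  ultimately show ?case by simp
qed

lemma Ck_mult: "open U \<Longrightarrow> Ck_on k U g \<Longrightarrow> Ck_on k U h \<Longrightarrow> Ck_on k U (\<lambda>x. g x * h x)"
proof (induction k arbitrary: g h)
  case 0 then show ?case by (simp add: continuous_on_mult)
next
  case (Suc k)
  have d: "\<And>x. x \<in> U \<Longrightarrow> g differentiable (at x) \<and> h differentiable (at x)"
    using Suc.prems differentiable_on_eq_differentiable_at by auto
  have fd: "frechet_derivative (\<lambda>x. g x * h x) (at x) e = g x * frechet_derivative h (at x) e + frechet_derivative g (at x) e * h x"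
    if "x \<in> U" for x e
  proof -
    have "((\<lambda>x. g x * h x) has_derivative (\<lambda>e. g x * frechet_derivative h (at x) e + frechet_derivative g (at x) e * h x)) (at x)"
      using d[OF that] by (intro has_derivative_mult) (auto simp: frechet_derivative_works[symmetric])
    from fun_cong[OF frechet_derivative_at[OF this], of e] show ?thesis by simp
  qed
  have gk: "Ck_on k U g" "Ck_on k U h" using Suc.prems Ck_Suc_imp by blast+
  have "Ck_on k U (\<lambda>x. g x * frechet_derivative h (at x) (axis j 1) + frechet_derivative g (at x) (axis j 1) * h x)" for j
  proof (rule Ck_add[OF Suc.prems(1)])
    show "Ck_on k U (\<lambda>x. g x * frechet_derivative h (at x) (axis j 1))"
      by (rule Suc.IH[OF Suc.prems(1) gk(1)]) (use Suc.prems(3) in simp)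
    show "Ck_on k U (\<lambda>x. frechet_derivative g (at x) (axis j 1) * h x)"
      by (rule Suc.IH[OF Suc.prems(1) _ gk(2)]) (use Suc.prems(2) in simp)
  qed
  then have "Ck_on k U (\<lambda>x. frechet_derivative (\<lambda>x. g x * h x) (at x) (axis j 1))" for j
    by (rule Ck_cong[OF Suc.prems(1)]) (simp only: fd)
  moreover have "(\<lambda>x. g x * h x) differentiable_on U" using Suc.prems by simp
  moreover have "continuous_on U (\<lambda>x. g x * h x)" using Suc.prems by (simp add: continuous_on_mult)
  ultimately show ?case by simp
qed

lemma Ck_inverse: "open U \<Longrightarrow> Ck_on k U g \<Longrightarrow> (\<And>x. x \<in> U \<Longrightarrow> g x \<noteq> 0) \<Longrightarrow> Ck_on k U (\<lambda>x. inverse (g x))"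
proof (induction k arbitrary: g)
  case 0 then show ?case by (simp add: continuous_on_inverse)
next
  case (Suc k)
  have d: "\<And>x. x \<in> U \<Longrightarrow> g differentiable (at x)"
    using Suc.prems differentiable_on_eq_differentiable_at by auto
  have fd: "frechet_derivative (\<lambda>x. inverse (g x)) (at x) e = (- 1) * frechet_derivative g (at x) e * (inverse (g x) * inverse (g x))"
    if "x \<in> U" for x e
  proof -
    have "((\<lambda>x. inverse (g x)) has_derivative (\<lambda>e. - (inverse (g x) * frechet_derivative g (at x) e * inverse (g x)))) (at x)"
      using d[OF that] Suc.prems(3)[OF that] by (intro Deriv.has_derivative_inverse) (auto simp: frechet_derivative_works[symmetric])
    from fun_cong[OF frechet_derivative_at[OF this], of e] show ?thesis by (simp add: algebra_simps)
  qed
  have gk: "Ck_on k U g" using Suc.prems Ck_Suc_imp by blast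
  have "Ck_on k U (\<lambda>x. (- 1) * frechet_derivative g (at x) (axis j 1) * (inverse (g x) * inverse (g x)))" for j
  proof (rule Ck_mult[OF Suc.prems(1)])
    show "Ck_on k U (\<lambda>x. (- 1) * frechet_derivative g (at x) (axis j 1))"
      by (rule Ck_mult[OF Suc.prems(1) Ck_const[OF Suc.prems(1)]]) (use Suc.prems(2) in simp)
    have ig: "Ck_on k U (\<lambda>x. inverse (g x))" by (rule Suc.IH) (use Suc.prems gk in auto)
    show "Ck_on k U (\<lambda>x. inverse (g x) * inverse (g x))" by (rule Ck_mult[OF Suc.prems(1) ig ig])
  qed
  then have "Ck_on k U (\<lambda>x. frechet_derivative (\<lambda>x. inverse (g x)) (at x) (axis j 1))" for j
    by (rule Ck_cong[OF Suc.prems(1)]) (simp only: fd)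
  moreover have "(\<lambda>x. inverse (g x)) differentiable_on U" using Suc.prems by simp
  moreover have "continuous_on U (\<lambda>x. inverse (g x))" using Suc.prems by (simp add: continuous_on_inverse)
  ultimately show ?case by simp
qed

definition sm :: "(real^'n) set \<Rightarrow> (real^'n \<Rightarrow> real) \<Rightarrow> bool" where
  "sm U g \<longleftrightarrow> smooth_on U g"

lemma smooth_const: "open U \<Longrightarrow> smooth_on U (\<lambda>x. c)"
  by (simp add: smooth_on_def Ck_const)
lemma smooth_coord: "open U \<Longrightarrow> smooth_on U (\<lambda>x. x $ i)"
  by (simp add: smooth_on_def Ck_coord)
lemma smooth_add: "open U \<Longrightarrow> smooth_on U g \<Longrightarrow> smooth_on U h \<Longrightarrow> smooth_on U (\<lambda>x. g x + h x)"
  by (simp add: smooth_on_def Ck_add)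
lemma smooth_mult: "open U \<Longrightarrow> smooth_on U g \<Longrightarrow> smooth_on U h \<Longrightarrow> smooth_on U (\<lambda>x. g x * h x)"
  by (simp add: smooth_on_def Ck_mult)
lemma smooth_inverse: "open U \<Longrightarrow> smooth_on U g \<Longrightarrow> (\<And>x. x \<in> U \<Longrightarrow> g x \<noteq> 0) \<Longrightarrow> smooth_on U (\<lambda>x. inverse (g x))"
  by (simp add: smooth_on_def Ck_inverse)
lemma smooth_cong: "open U \<Longrightarrow> smooth_on U g \<Longrightarrow> (\<And>x. x \<in> U \<Longrightarrow> g x = h x) \<Longrightarrow> smooth_on U h"
  by (meson Ck_cong smooth_on_def)
lemma smooth_sum: "open U \<Longrightarrow> (\<And>a. a \<in> A \<Longrightarrow> smooth_on U (g a)) \<Longrightarrow> smooth_on U (\<lambda>x. \<Sum>a\<in>A. g a x)"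
proof (induction A rule: infinite_finite_induct)
  case (infinite A) then show ?case by (simp add: smooth_const)
next
  case empty then show ?case by (simp add: smooth_const)
next
  case (insert a F) then show ?case by (simp add: smooth_add)
qed
lemma smooth_diff: "open U \<Longrightarrow> smooth_on U g \<Longrightarrow> smooth_on U h \<Longrightarrow> smooth_on U (\<lambda>x. g x - h x)"
proof -
  assume a: "open U" "smooth_on U g" "smooth_on U h"
  have "smooth_on U (\<lambda>x. g x + (-1) * h x)"
    by (intro smooth_add smooth_mult smooth_const a)
  then show ?thesis by simp
qed
lemma smooth_divide: "open U \<Longrightarrow> smooth_on U g \<Longrightarrow> smooth_on U h \<Longrightarrow> (\<And>x. x \<in> U \<Longrightarrow> h x \<noteq> 0) \<Longrightarrow> smooth_on U (\<lambda>x. g x / h x)"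
proof -
  assume a: "open U" "smooth_on U g" "smooth_on U h" "\<And>x. x \<in> U \<Longrightarrow> h x \<noteq> 0"
  have "smooth_on U (\<lambda>x. g x * inverse (h x))"
    by (intro smooth_mult smooth_inverse a) (use a in auto)
  then show ?thesis by (simp add: divide_inverse)
qed
lemma smooth_power: "open U \<Longrightarrow> smooth_on U g \<Longrightarrow> smooth_on U (\<lambda>x. g x ^ m)"
proof (induction m)
  case 0 then show ?case by (simp add: smooth_const)
next
  case (Suc m)
  have "smooth_on U (\<lambda>x. g x * g x ^ m)" by (rule smooth_mult[OF Suc.prems(1,2) Suc.IH[OF Suc.prems]])
  then show ?case by (simp only: power_Suc)
qed


lemma mono_sel[simp]: "mlam (k,M,T) = k" "mev (k,M,T) = M" "mth (k,M,T) = T"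
  by (simp_all add: mlam_def mev_def mth_def)

definition sg :: "('n::linorder \<times> nat) set \<Rightarrow> 'n \<times> nat \<Rightarrow> real" where
  "sg T v = (-1) ^ card {a\<in>T. lexless a v}"

definition ee :: "('n::linorder \<times> nat) \<Rightarrow> ('n \<times> nat) \<Rightarrow> real" where
  "ee w v = (if lexless w v then -1 else 1)"

lemma lexless_irrefl[simp]: "\<not> lexless v v"
  by (simp add: lexless_def)

lemma ee_anti: "w \<noteq> v \<Longrightarrow> ee w v = - ee v w"
  by (cases w; cases v) (auto simp: ee_def lexless_def)

lemma sg_sq: "sg T v * sg T v = 1"
  by (simp add: sg_def flip: power_add)

lemma sg_remove_self[simp]: "sg (T - {v}) v = sg T v"
proof -
  have "{a\<in>T - {v}. lexless a v} = {a\<in>T. lexless a v}" by auto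
  then show ?thesis by (simp add: sg_def)
qed

lemma sg_insert_self[simp]: "sg (insert v T) v = sg T v"
proof -
  have "{a\<in>insert v T. lexless a v} = {a\<in>T. lexless a v}" by auto
  then show ?thesis by (simp add: sg_def)
qed

lemma sg_remove: assumes "finite T" "w \<in> T" "w \<noteq> v"
  shows "sg (T - {w}) v = ee w v * sg T v"
proof (cases "lexless w v")
  case True
  have e: "{a\<in>T - {w}. lexless a v} = {a\<in>T. lexless a v} - {w}" by auto
  have f: "finite {a\<in>T. lexless a v}" using assms by auto
  have w: "w \<in> {a\<in>T. lexless a v}" using True assms by auto
  have c: "card {a\<in>T. lexless a v} = Suc (card ({a\<in>T. lexless a v} - {w}))"
    by (rule card.remove[OF f w])
  show ?thesis unfolding sg_def e using True c by (simp add: ee_def)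
next
  case False
  have e: "{a\<in>T - {w}. lexless a v} = {a\<in>T. lexless a v}" using False by auto
  show ?thesis unfolding sg_def e using False by (simp add: ee_def)
qed

lemma sg_insert: assumes "finite T" "w \<notin> T" "w \<noteq> v"
  shows "sg (insert w T) v = ee w v * sg T v"
proof -
  have "sg (insert w T - {w}) v = ee w v * sg (insert w T) v"
    using assms by (intro sg_remove) auto
  then have "sg T v = ee w v * sg (insert w T) v" using assms by simp
  then have "ee w v * sg T v = ee w v * ee w v * sg (insert w T) v" by simp
  moreover have "ee w v * ee w v = 1" by (simp add: ee_def)
  ultimately show ?thesis by (simp add: mult.assoc)
qed

definition Sd :: "'n \<Rightarrow> 'n mono \<Rightarrow> nat set" where
  "Sd i x = {s. 1 \<le> s \<and> (i, s+1) \<in> mth x}"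
definition Sh :: "'n \<Rightarrow> 'n mono \<Rightarrow> nat set" where
  "Sh i x = {s. 1 \<le> s \<and> (i, s) \<in># mev x \<and> (i, s+1) \<notin> mth x}"

lemma finite_Sd: "finite (mth x) \<Longrightarrow> finite (Sd i x)"
proof -
  assume "finite (mth x)"
  moreover have "Sd i x \<subseteq> (\<lambda>v. snd v - 1) ` mth x"
    unfolding Sd_def by (force simp: image_iff)
  ultimately show ?thesis by (meson finite_imageI finite_subset)
qed

lemma finite_Sh: "finite (Sh i x)"
proof -
  have "Sh i x \<subseteq> snd ` set_mset (mev x)"
    unfolding Sh_def by (force simp: image_iff)
  then show ?thesis by (meson finite_imageI finite_set_mset finite_subset)
qed

definition Dd :: "'n::{finite,linorder} \<Rightarrow> 'n series \<Rightarrow> 'n series" where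
  "Dd i F x p = (\<Sum>s\<in>Sd i x. sg (mth x) (i,s+1) * (real (count (mev x) (i,s)) + 1) *
       F (mlam x, add_mset (i,s) (mev x), mth x - {(i,s+1)}) p)"

definition Hh :: "'n::{finite,linorder} \<Rightarrow> 'n series \<Rightarrow> 'n series" where
  "Hh i F x p = (\<Sum>s\<in>Sh i x. sg (mth x) (i,s+1) *
       F (mlam x, mev x - {#(i,s)#}, insert (i,s+1) (mth x)) p)"

lemma dhat_Dd: "dhat i F = Dd i F"
proof (intro ext)
  fix x p
  show "dhat i F x p = Dd i F x p"
    unfolding dhat_def Dd_def
    by (rule sum.cong) (auto simp: Sd_def thmul_def pd_def mlam_def mev_def mth_def sg_def)
qed

definition Nn :: "'n \<Rightarrow> 'n mono \<Rightarrow> nat" where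
  "Nn i x = size (filter_mset (\<lambda>v. fst v = i \<and> 1 \<le> snd v) (mev x)) + card (Sd i x)"

definition Nsame :: "'n mono \<Rightarrow> 'n mono \<Rightarrow> bool" where
  "Nsame y x \<longleftrightarrow> mlam y = mlam x \<and> (\<forall>j. Nn j y = Nn j x)"

lemma Sd_d: assumes "s \<in> Sd i (k,M,T)"
  shows "Sd j (k', add_mset (i,s) M, T - {(i,s+1)}) = (if j = i then Sd i (k,M,T) - {s} else Sd j (k,M,T))"
  using assms by (auto simp: Sd_def)

lemma Sd_h: assumes "t \<in> Sh i (k,M,T)"
  shows "Sd j (k', M - {#(i,t)#}, insert (i,t+1) T) = (if j = i then insert t (Sd i (k,M,T)) else Sd j (k,M,T))"
  using assms by (auto simp: Sd_def Sh_def)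

lemma Sh_d: assumes "s \<in> Sd i (k,M,T)"
  shows "Sh j (k', add_mset (i,s) M, T - {(i,s+1)}) = (if j = i then insert s (Sh i (k,M,T)) else Sh j (k,M,T))"
  using assms by (auto simp: Sd_def Sh_def)

lemma Sh_h: assumes "t \<in> Sh i (k,M,T)"
  shows "Sh j (k', M - {#(i,t)#}, insert (i,t+1) T) = (if j = i then Sh i (k,M,T) - {t} else Sh j (k,M,T))"
  using assms by (auto simp: Sd_def Sh_def in_diff_count)

lemma Nn_d: assumes "finite T" "s \<in> Sd i (k,M,T)"
  shows "Nn j (k', add_mset (i,s) M, T - {(i,s+1)}) = Nn j (k,M,T)"
proof (cases "j = i")
  case True
  have s1: "1 \<le> s" "s \<in> Sd i (k,M,T)" using assms by (auto simp: Sd_def)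
  have fin: "finite (Sd i (k,M,T))" using finite_Sd[of "(k,M,T)"] assms by simp
  have "card (Sd i (k,M,T) - {s}) + 1 = card (Sd i (k,M,T))"
    using card.remove[OF fin s1(2)] by simp
  then show ?thesis using True s1 Sd_d[OF assms(2), of j k'] by (simp add: Nn_def)
next
  case False
  have "filter_mset (\<lambda>v. fst v = j \<and> 1 \<le> snd v) (add_mset (i,s) M) = filter_mset (\<lambda>v. fst v = j \<and> 1 \<le> snd v) M"
    using False by simp
  then show ?thesis using False Sd_d[OF assms(2), of j k'] by (simp add: Nn_def)
qed

lemma Nn_h: assumes "finite T" "t \<in> Sh i (k,M,T)"
  shows "Nn j (k', M - {#(i,t)#}, insert (i,t+1) T) = Nn j (k,M,T)"
proof (cases "j = i")
  case True
  have t1: "1 \<le> t" "(i,t) \<in># M" "t \<notin> Sd i (k,M,T)" using assms by (auto simp: Sh_def Sd_def)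
  have fin: "finite (Sd i (k,M,T))" using finite_Sd[of "(k,M,T)"] assms by simp
  have "filter_mset (\<lambda>v. fst v = i \<and> 1 \<le> snd v) (M - {#(i,t)#}) = filter_mset (\<lambda>v. fst v = i \<and> 1 \<le> snd v) M - {#(i,t)#}"
    using t1 by simp
  moreover have "(i,t) \<in># filter_mset (\<lambda>v. fst v = i \<and> 1 \<le> snd v) M" using t1 by simp
  ultimately have "size (filter_mset (\<lambda>v. fst v = i \<and> 1 \<le> snd v) (M - {#(i,t)#})) + 1 = size (filter_mset (\<lambda>v. fst v = i \<and> 1 \<le> snd v) M)"
    using size_Diff_singleton[of "(i,t)" "filter_mset (\<lambda>v. fst v = i \<and> 1 \<le> snd v) M"]
      size_Diff1_less[of "(i,t)" "filter_mset (\<lambda>v. fst v = i \<and> 1 \<le> snd v) M"] by simp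
  then show ?thesis using True t1 fin Sd_h[OF assms(2), of j k'] by (simp add: Nn_def)
next
  case False
  have "filter_mset (\<lambda>v. fst v = j \<and> 1 \<le> snd v) (M - {#(i,t)#}) = filter_mset (\<lambda>v. fst v = j \<and> 1 \<le> snd v) M"
    using False by simp
  then show ?thesis using False Sd_h[OF assms(2), of j k'] by (simp add: Nn_def)
qed


lemma aux_distr: "(a::real) * b * (a * f + (\<Sum>t\<in>B. g t)) = (a * a) * b * f + (\<Sum>t\<in>B. a * b * g t)"
  by (simp add: algebra_simps sum_distrib_left)

lemma size_filter_sum_gen:
  assumes "finite S"
  shows "size (filter_mset (\<lambda>v. fst v = i \<and> snd v \<in> S) M) = (\<Sum>s\<in>S. count M (i,s))"
proof (induction M)
  case empty then show ?case by simp
next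
  case (add a M)
  obtain j r where a: "a = (j,r)" by (cases a)
  have "(\<Sum>s\<in>S. count (add_mset a M) (i,s)) = (\<Sum>s\<in>S. count M (i,s)) + (\<Sum>s\<in>S. if s = r \<and> j = i then 1 else 0)"
    by (auto simp: a sum.distrib[symmetric] intro!: sum.cong)
  also have "(\<Sum>s\<in>S. if s = r \<and> j = i then 1 else (0::nat)) = (if j = i \<and> r \<in> S then 1 else 0)"
    using assms by (cases "j = i") (simp_all add: sum.delta)
  finally show ?case using add by (auto simp: a)
qed

lemma size_filter_sum:
  assumes "finite S" "\<And>s. 1 \<le> s \<Longrightarrow> (i,s) \<in># M \<Longrightarrow> s \<in> S" "\<And>s. s \<in> S \<Longrightarrow> 1 \<le> s"
  shows "size (filter_mset (\<lambda>v. fst v = i \<and> 1 \<le> snd v) M) = (\<Sum>s\<in>S. count M (i,s))"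
proof -
  have "filter_mset (\<lambda>v. fst v = i \<and> 1 \<le> snd v) M = filter_mset (\<lambda>v. fst v = i \<and> snd v \<in> S) M"
    by (rule filter_mset_cong) (use assms(2,3) in force)+
  then show ?thesis using size_filter_sum_gen[OF assms(1)] by simp
qed

lemma lin_aux: "a + b = 0 \<Longrightarrow> N = X + Y \<Longrightarrow> X * f + a + (Y * f + b) = N * (f::real)"
proof -
  assume h: "a + b = 0" "N = X + Y"
  have "N * f = X * f + Y * f" using h(2) by (simp add: distrib_right)
  then show ?thesis using h(1) by linarith
qed

lemma euler:
  assumes fT: "finite T"
  shows "Dd i (Hh i F) (k,M,T) p + Hh i (Dd i F) (k,M,T) p = real (Nn i (k,M,T)) * F (k,M,T) p"
proof -
  define A where "A = Sd i (k,M,T)"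
  define B where "B = Sh i (k,M,T)"
  have fA: "finite A" using finite_Sd[of "(k,M,T)" i] fT by (simp add: A_def)
  have fB: "finite B" using finite_Sh by (simp add: B_def)
  have AB: "A \<inter> B = {}" by (auto simp: A_def B_def Sd_def Sh_def)
  define c where "c s = real (count M (i,s))" for s
  define X where "X s t = F (k, add_mset (i,s) M - {#(i,t)#}, insert (i,t+1) (T - {(i,s+1)})) p" for s t
  have L1: "Dd i (Hh i F) (k,M,T) p = (\<Sum>s\<in>A. (c s + 1) * F (k,M,T) p + (\<Sum>t\<in>B. sg T (i,s+1) * (c s + 1) * (sg (T - {(i,s+1)}) (i,t+1) * X s t)))"
    unfolding Dd_def
  proof (rule sum.cong)
    show "Sd i (k,M,T) = A" by (simp add: A_def)
  next
    fix s assume s: "s \<in> A"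
    have sB: "s \<notin> B" using s AB by auto
    have sT: "(i,s+1) \<in> T" using s by (simp add: A_def Sd_def)
    have "Hh i F (k, add_mset (i,s) M, T - {(i,s+1)}) p = (\<Sum>t\<in>insert s B. sg (T - {(i,s+1)}) (i,t+1) * F (k, add_mset (i,s) M - {#(i,t)#}, insert (i,t+1) (T - {(i,s+1)})) p)"
      unfolding Hh_def using Sh_d[of s i k M T i k] s by (simp add: A_def B_def)
    also have "\<dots> = sg T (i,s+1) * F (k,M,T) p + (\<Sum>t\<in>B. sg (T - {(i,s+1)}) (i,t+1) * X s t)"
      using fB sB sT by (simp add: X_def insert_absorb)
    finally have h: "Hh i F (k, add_mset (i,s) M, T - {(i,s+1)}) p = sg T (i,s+1) * F (k,M,T) p + (\<Sum>t\<in>B. sg (T - {(i,s+1)}) (i,t+1) * X s t)" .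
    show "sg (mth (k,M,T)) (i,s+1) * (real (count (mev (k,M,T)) (i,s)) + 1) * Hh i F (mlam (k,M,T), add_mset (i,s) (mev (k,M,T)), mth (k,M,T) - {(i,s+1)}) p = (c s + 1) * F (k,M,T) p + (\<Sum>t\<in>B. sg T (i,s+1) * (c s + 1) * (sg (T - {(i,s+1)}) (i,t+1) * X s t))"
      unfolding mono_sel h aux_distr sg_sq by (simp add: c_def)
  qed
  have L2: "Hh i (Dd i F) (k,M,T) p = (\<Sum>t\<in>B. c t * F (k,M,T) p + (\<Sum>s\<in>A. sg T (i,t+1) * (sg (insert (i,t+1) T) (i,s+1) * (c s + 1) * X s t)))"
    unfolding Hh_def
  proof (rule sum.cong)
    show "Sh i (k,M,T) = B" by (simp add: B_def)
  next
    fix t assume t: "t \<in> B"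
    have tA: "t \<notin> A" using t AB by auto
    have tT: "(i,t+1) \<notin> T" "(i,t) \<in># M" using t by (auto simp: B_def Sh_def)
    have "Dd i F (k, M - {#(i,t)#}, insert (i,t+1) T) p = (\<Sum>s\<in>insert t A. sg (insert (i,t+1) T) (i,s+1) * (real (count (M - {#(i,t)#}) (i,s)) + 1) * F (k, add_mset (i,s) (M - {#(i,t)#}), insert (i,t+1) T - {(i,s+1)}) p)"
      unfolding Dd_def using Sd_h[of t i k M T i k] t by (simp add: A_def B_def)
    also have "\<dots> = sg T (i,t+1) * (real (count (M - {#(i,t)#}) (i,t)) + 1) * F (k,M,T) p + (\<Sum>s\<in>A. sg (insert (i,t+1) T) (i,s+1) * (real (count (M - {#(i,t)#}) (i,s)) + 1) * F (k, add_mset (i,s) (M - {#(i,t)#}), insert (i,t+1) T - {(i,s+1)}) p)"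
      using fA tA tT by (simp add: insert_absorb)
    also have "(\<Sum>s\<in>A. sg (insert (i,t+1) T) (i,s+1) * (real (count (M - {#(i,t)#}) (i,s)) + 1) * F (k, add_mset (i,s) (M - {#(i,t)#}), insert (i,t+1) T - {(i,s+1)}) p)
       = (\<Sum>s\<in>A. sg (insert (i,t+1) T) (i,s+1) * (c s + 1) * X s t)"
    proof (rule sum.cong)
      fix s assume s: "s \<in> A"
      have st: "s \<noteq> t" using s tA by auto
      have "add_mset (i,s) (M - {#(i,t)#}) = add_mset (i,s) M - {#(i,t)#}"
        using diff_union_swap[of "(i,t)" "(i,s)" M] st by simp
      moreover have "insert (i,t+1) T - {(i,s+1)} = insert (i,t+1) (T - {(i,s+1)})" using st by auto
      moreover have "count (M - {#(i,t)#}) (i,s) = count M (i,s)" using st by simp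
      ultimately show "sg (insert (i,t+1) T) (i,s+1) * (real (count (M - {#(i,t)#}) (i,s)) + 1) * F (k, add_mset (i,s) (M - {#(i,t)#}), insert (i,t+1) T - {(i,s+1)}) p = sg (insert (i,t+1) T) (i,s+1) * (c s + 1) * X s t"
        by (simp add: X_def c_def)
    qed simp
    also have "real (count (M - {#(i,t)#}) (i,t)) + 1 = c t"
      using tT(2) by (simp add: c_def)
    finally have h: "Dd i F (k, M - {#(i,t)#}, insert (i,t+1) T) p = sg T (i,t+1) * c t * F (k,M,T) p + (\<Sum>s\<in>A. sg (insert (i,t+1) T) (i,s+1) * (c s + 1) * X s t)" .
    have e: "sg T (i,t+1) * (sg T (i,t+1) * c t * F (k,M,T) p + (\<Sum>s\<in>A. sg (insert (i,t+1) T) (i,s+1) * (c s + 1) * X s t))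
      = (sg T (i,t+1) * sg T (i,t+1)) * c t * F (k,M,T) p + (\<Sum>s\<in>A. sg T (i,t+1) * (sg (insert (i,t+1) T) (i,s+1) * (c s + 1) * X s t))"
      by (simp add: algebra_simps sum_distrib_left)
    show "sg (mth (k,M,T)) (i,t+1) * Dd i F (mlam (k,M,T), mev (k,M,T) - {#(i,t)#}, insert (i,t+1) (mth (k,M,T))) p = c t * F (k,M,T) p + (\<Sum>s\<in>A. sg T (i,t+1) * (sg (insert (i,t+1) T) (i,s+1) * (c s + 1) * X s t))"
      unfolding mono_sel h e sg_sq by simp
  qed
  have cancel: "(\<Sum>s\<in>A. \<Sum>t\<in>B. sg T (i,s+1) * (c s + 1) * (sg (T - {(i,s+1)}) (i,t+1) * X s t))
     + (\<Sum>t\<in>B. \<Sum>s\<in>A. sg T (i,t+1) * (sg (insert (i,t+1) T) (i,s+1) * (c s + 1) * X s t)) = 0"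
  proof -
    have "(\<Sum>t\<in>B. \<Sum>s\<in>A. sg T (i,t+1) * (sg (insert (i,t+1) T) (i,s+1) * (c s + 1) * X s t))
        = (\<Sum>s\<in>A. \<Sum>t\<in>B. sg T (i,t+1) * (sg (insert (i,t+1) T) (i,s+1) * (c s + 1) * X s t))"
      by (rule sum.swap)
    moreover have "(\<Sum>s\<in>A. \<Sum>t\<in>B. sg T (i,s+1) * (c s + 1) * (sg (T - {(i,s+1)}) (i,t+1) * X s t))
        = - (\<Sum>s\<in>A. \<Sum>t\<in>B. sg T (i,t+1) * (sg (insert (i,t+1) T) (i,s+1) * (c s + 1) * X s t))"
      unfolding sum_negf[symmetric]
    proof (intro sum.cong refl)
      fix s t assume s: "s \<in> A" and t: "t \<in> B"
      have st: "(i,s+1) \<noteq> (i,t+1)" using s t AB by auto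
      have sT: "(i,s+1) \<in> T" using s by (simp add: A_def Sd_def)
      have tT: "(i,t+1) \<notin> T" using t by (simp add: B_def Sh_def)
      have r: "sg (T - {(i,s+1)}) (i,t+1) = ee (i,s+1) (i,t+1) * sg T (i,t+1)"
        by (rule sg_remove[OF fT sT st])
      have q: "sg (insert (i,t+1) T) (i,s+1) = ee (i,t+1) (i,s+1) * sg T (i,s+1)"
        by (rule sg_insert[OF fT tT st[symmetric]])
      show "sg T (i,s+1) * (c s + 1) * (sg (T - {(i,s+1)}) (i,t+1) * X s t) = - (sg T (i,t+1) * (sg (insert (i,t+1) T) (i,s+1) * (c s + 1) * X s t))"
        unfolding r q ee_anti[OF st] by (simp add: algebra_simps)
    qed
    ultimately show ?thesis by simp
  qed
  have cover: "\<And>s. 1 \<le> s \<Longrightarrow> (i,s) \<in># M \<Longrightarrow> s \<in> A \<union> B" by (auto simp: A_def B_def Sd_def Sh_def)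
  have sub: "\<And>s. s \<in> A \<union> B \<Longrightarrow> 1 \<le> s" by (auto simp: A_def B_def Sd_def Sh_def)
  have sz: "size (filter_mset (\<lambda>v. fst v = i \<and> 1 \<le> snd v) M) = (\<Sum>s\<in>A \<union> B. count M (i,s))"
    using size_filter_sum[OF _ cover sub] fA fB by simp
  have NN: "real (Nn i (k,M,T)) = (sum c A + (\<Sum>s\<in>A. 1)) + sum c B"
    unfolding Nn_def mono_sel sz
    using fA fB AB by (simp add: c_def sum.union_disjoint sum.distrib A_def[symmetric])
  have e1: "(\<Sum>s\<in>A. (c s + 1) * F (k,M,T) p) = (\<Sum>s\<in>A. c s + 1) * F (k,M,T) p" by (simp add: sum_distrib_right)
  have e2: "(\<Sum>t\<in>B. c t * F (k,M,T) p) = (\<Sum>t\<in>B. c t) * F (k,M,T) p" by (simp add: sum_distrib_right)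
  show ?thesis
    unfolding L1 L2 sum.distrib e1 e2 by (rule lin_aux[OF cancel NN])
qed


lemma cross:
  assumes fT: "finite T" and lm: "l \<noteq> m"
  shows "Dd l (Hh m F) (k,M,T) p + Hh m (Dd l F) (k,M,T) p = 0"
proof -
  define A where "A = Sd l (k,M,T)"
  define B where "B = Sh m (k,M,T)"
  have fA: "finite A" using finite_Sd[of "(k,M,T)" l] fT by (simp add: A_def)
  have fB: "finite B" using finite_Sh by (simp add: B_def)
  define c where "c s = real (count M (l,s))" for s
  define X where "X s t = F (k, add_mset (l,s) M - {#(m,t)#}, insert (m,t+1) (T - {(l,s+1)})) p" for s t
  have L1: "Dd l (Hh m F) (k,M,T) p = (\<Sum>s\<in>A. \<Sum>t\<in>B. sg T (l,s+1) * (c s + 1) * (sg (T - {(l,s+1)}) (m,t+1) * X s t))"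
    unfolding Dd_def
  proof (rule sum.cong)
    show "Sd l (k,M,T) = A" by (simp add: A_def)
  next
    fix s assume s: "s \<in> A"
    have "Hh m F (k, add_mset (l,s) M, T - {(l,s+1)}) p = (\<Sum>t\<in>B. sg (T - {(l,s+1)}) (m,t+1) * X s t)"
      unfolding Hh_def using Sh_d[of s l k M T m k] s lm by (simp add: A_def B_def X_def)
    then show "sg (mth (k,M,T)) (l,s+1) * (real (count (mev (k,M,T)) (l,s)) + 1) * Hh m F (mlam (k,M,T), add_mset (l,s) (mev (k,M,T)), mth (k,M,T) - {(l,s+1)}) p = (\<Sum>t\<in>B. sg T (l,s+1) * (c s + 1) * (sg (T - {(l,s+1)}) (m,t+1) * X s t))"
      by (simp add: c_def sum_distrib_left)
  qed
  have L2: "Hh m (Dd l F) (k,M,T) p = (\<Sum>t\<in>B. \<Sum>s\<in>A. sg T (m,t+1) * (sg (insert (m,t+1) T) (l,s+1) * (c s + 1) * X s t))"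
    unfolding Hh_def
  proof (rule sum.cong)
    show "Sh m (k,M,T) = B" by (simp add: B_def)
  next
    fix t assume t: "t \<in> B"
    have "Dd l F (k, M - {#(m,t)#}, insert (m,t+1) T) p = (\<Sum>s\<in>A. sg (insert (m,t+1) T) (l,s+1) * (real (count (M - {#(m,t)#}) (l,s)) + 1) * F (k, add_mset (l,s) (M - {#(m,t)#}), insert (m,t+1) T - {(l,s+1)}) p)"
      unfolding Dd_def using Sd_h[of t m k M T l k] t lm by (simp add: A_def B_def)
    also have "\<dots> = (\<Sum>s\<in>A. sg (insert (m,t+1) T) (l,s+1) * (c s + 1) * X s t)"
    proof (rule sum.cong)
      fix s assume s: "s \<in> A"
      have "add_mset (l,s) (M - {#(m,t)#}) = add_mset (l,s) M - {#(m,t)#}"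
        using diff_union_swap[of "(m,t)" "(l,s)" M] lm by simp
      moreover have "insert (m,t+1) T - {(l,s+1)} = insert (m,t+1) (T - {(l,s+1)})" using lm by auto
      moreover have "count (M - {#(m,t)#}) (l,s) = count M (l,s)" using lm by simp
      ultimately show "sg (insert (m,t+1) T) (l,s+1) * (real (count (M - {#(m,t)#}) (l,s)) + 1) * F (k, add_mset (l,s) (M - {#(m,t)#}), insert (m,t+1) T - {(l,s+1)}) p = sg (insert (m,t+1) T) (l,s+1) * (c s + 1) * X s t"
        by (simp add: X_def c_def)
    qed simp
    finally show "sg (mth (k,M,T)) (m,t+1) * Dd l F (mlam (k,M,T), mev (k,M,T) - {#(m,t)#}, insert (m,t+1) (mth (k,M,T))) p = (\<Sum>s\<in>A. sg T (m,t+1) * (sg (insert (m,t+1) T) (l,s+1) * (c s + 1) * X s t))"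
      by (simp add: sum_distrib_left)
  qed
  have "(\<Sum>t\<in>B. \<Sum>s\<in>A. sg T (m,t+1) * (sg (insert (m,t+1) T) (l,s+1) * (c s + 1) * X s t))
      = (\<Sum>s\<in>A. \<Sum>t\<in>B. sg T (m,t+1) * (sg (insert (m,t+1) T) (l,s+1) * (c s + 1) * X s t))"
    by (rule sum.swap)
  moreover have "(\<Sum>s\<in>A. \<Sum>t\<in>B. sg T (l,s+1) * (c s + 1) * (sg (T - {(l,s+1)}) (m,t+1) * X s t))
      = - (\<Sum>s\<in>A. \<Sum>t\<in>B. sg T (m,t+1) * (sg (insert (m,t+1) T) (l,s+1) * (c s + 1) * X s t))"
    unfolding sum_negf[symmetric]
  proof (intro sum.cong refl)
    fix s t assume s: "s \<in> A" and t: "t \<in> B"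
    have st: "(l,s+1) \<noteq> (m,t+1)" using lm by auto
    have sT: "(l,s+1) \<in> T" using s by (simp add: A_def Sd_def)
    have tT: "(m,t+1) \<notin> T" using t by (simp add: B_def Sh_def)
    have r: "sg (T - {(l,s+1)}) (m,t+1) = ee (l,s+1) (m,t+1) * sg T (m,t+1)"
      by (rule sg_remove[OF fT sT st])
    have q: "sg (insert (m,t+1) T) (l,s+1) = ee (m,t+1) (l,s+1) * sg T (l,s+1)"
      by (rule sg_insert[OF fT tT st[symmetric]])
    show "sg T (l,s+1) * (c s + 1) * (sg (T - {(l,s+1)}) (m,t+1) * X s t) = - (sg T (m,t+1) * (sg (insert (m,t+1) T) (l,s+1) * (c s + 1) * X s t))"
      unfolding r q ee_anti[OF st] by (simp add: algebra_simps)
  qed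
  ultimately show ?thesis unfolding L1 L2 by simp
qed

lemma sum_antisym:
  fixes \<phi> :: "nat \<Rightarrow> nat \<Rightarrow> real"
  assumes "finite A" "\<And>s t. s \<in> A \<Longrightarrow> t \<in> A \<Longrightarrow> s \<noteq> t \<Longrightarrow> \<phi> t s = - \<phi> s t"
  shows "(\<Sum>s\<in>A. \<Sum>t\<in>A - {s}. \<phi> s t) = 0"
proof -
  have e: "\<And>s. {t\<in>A. s \<noteq> t} = A - {s}" by auto
  have e': "\<And>t. {s\<in>A. s \<noteq> t} = A - {t}" by auto
  have "(\<Sum>s\<in>A. \<Sum>t\<in>{t\<in>A. s \<noteq> t}. \<phi> s t) = (\<Sum>t\<in>A. \<Sum>s\<in>{s\<in>A. s \<noteq> t}. \<phi> s t)"
    by (rule sum.swap_restrict[OF assms(1) assms(1)])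
  then have "(\<Sum>s\<in>A. \<Sum>t\<in>A - {s}. \<phi> s t) = (\<Sum>t\<in>A. \<Sum>s\<in>A - {t}. \<phi> s t)"
    unfolding e e' .
  also have "\<dots> = (\<Sum>t\<in>A. \<Sum>s\<in>A - {t}. - \<phi> t s)"
  proof (intro sum.cong refl)
    fix t s assume "t \<in> A" "s \<in> A - {t}"
    then show "\<phi> s t = - \<phi> t s" using assms(2)[of t s] by simp
  qed
  also have "\<dots> = - (\<Sum>t\<in>A. \<Sum>s\<in>A - {t}. \<phi> t s)"
    by (simp add: sum_negf)
  finally show ?thesis by simp
qed

lemma dsq:
  assumes fT: "finite T"
  shows "Dd i (Dd i F) (k,M,T) p = 0"
proof -
  define A where "A = Sd i (k,M,T)"
  have fA: "finite A" using finite_Sd[of "(k,M,T)" i] fT by (simp add: A_def)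
  define c where "c s = real (count M (i,s))" for s
  define Y where "Y s t = F (k, add_mset (i,t) (add_mset (i,s) M), T - {(i,s+1)} - {(i,t+1)}) p" for s t
  define \<phi> where "\<phi> s t = sg T (i,s+1) * (c s + 1) * (sg (T - {(i,s+1)}) (i,t+1) * (c t + 1) * Y s t)" for s t
  have "Dd i (Dd i F) (k,M,T) p = (\<Sum>s\<in>A. \<Sum>t\<in>A - {s}. \<phi> s t)"
    unfolding Dd_def[of i "Dd i F"]
  proof (rule sum.cong)
    show "Sd i (k,M,T) = A" by (simp add: A_def)
  next
    fix s assume s: "s \<in> A"
    have "Dd i F (k, add_mset (i,s) M, T - {(i,s+1)}) p = (\<Sum>t\<in>A - {s}. sg (T - {(i,s+1)}) (i,t+1) * (real (count (add_mset (i,s) M) (i,t)) + 1) * F (k, add_mset (i,t) (add_mset (i,s) M), T - {(i,s+1)} - {(i,t+1)}) p)"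
      unfolding Dd_def using Sd_d[of s i k M T i k] s by (simp add: A_def)
    also have "\<dots> = (\<Sum>t\<in>A - {s}. sg (T - {(i,s+1)}) (i,t+1) * (c t + 1) * Y s t)"
      by (intro sum.cong refl) (auto simp: c_def Y_def)
    finally show "sg (mth (k,M,T)) (i,s+1) * (real (count (mev (k,M,T)) (i,s)) + 1) * Dd i F (mlam (k,M,T), add_mset (i,s) (mev (k,M,T)), mth (k,M,T) - {(i,s+1)}) p = (\<Sum>t\<in>A - {s}. \<phi> s t)"
      by (simp add: c_def sum_distrib_left \<phi>_def)
  qed
  also have "\<dots> = 0"
  proof (rule sum_antisym[OF fA])
    fix s t assume s: "s \<in> A" and t: "t \<in> A" and st0: "s \<noteq> t"
    have st: "(i,s+1) \<noteq> (i,t+1)" using st0 by auto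
    have sT: "(i,s+1) \<in> T" using s by (simp add: A_def Sd_def)
    have tT: "(i,t+1) \<in> T" using t by (simp add: A_def Sd_def)
    have Ys: "Y t s = Y s t" unfolding Y_def by (simp add: add_mset_commute Diff_insert2[symmetric] insert_commute)
    have r1: "sg (T - {(i,s+1)}) (i,t+1) = ee (i,s+1) (i,t+1) * sg T (i,t+1)"
      by (rule sg_remove[OF fT sT st])
    have r2: "sg (T - {(i,t+1)}) (i,s+1) = ee (i,t+1) (i,s+1) * sg T (i,s+1)"
      by (rule sg_remove[OF fT tT st[symmetric]])
    show "\<phi> t s = - \<phi> s t"
      unfolding \<phi>_def r1 r2 Ys ee_anti[OF st] by (simp add: algebra_simps)
  qed
  finally show ?thesis .
qed

lemma Dd_cong:
  assumes "valid_mono (k,M,T)" "\<And>y. valid_mono y \<Longrightarrow> Nsame y (k,M,T) \<Longrightarrow> F y p = G y p"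
  shows "Dd i F (k,M,T) p = Dd i G (k,M,T) p"
  unfolding Dd_def
proof (intro sum.cong refl)
  fix s assume s: "s \<in> Sd i (k,M,T)"
  then have s': "s \<in> Sd i (k,M,T)" by simp
  have fT: "finite T" using assms(1) by (simp add: valid_mono_def)
  have "valid_mono (k, add_mset (i,s) M, T - {(i,s+1)})"
    using assms(1) s' by (auto simp: valid_mono_def Sd_def)
  moreover have "Nsame (k, add_mset (i,s) M, T - {(i,s+1)}) (k,M,T)"
    using Nn_d[OF fT s'] by (simp add: Nsame_def)
  ultimately show "sg (mth (k,M,T)) (i,s+1) * (real (count (mev (k,M,T)) (i,s)) + 1) * F (mlam (k,M,T), add_mset (i,s) (mev (k,M,T)), mth (k,M,T) - {(i,s+1)}) p
     = sg (mth (k,M,T)) (i,s+1) * (real (count (mev (k,M,T)) (i,s)) + 1) * G (mlam (k,M,T), add_mset (i,s) (mev (k,M,T)), mth (k,M,T) - {(i,s+1)}) p"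
    using assms(2) by simp
qed

lemma Hh_eq: "Hh i F (k,M,T) p = (\<Sum>s\<in>Sh i (k,M,T). sg T (i,s+1) * F (k, M - {#(i,s)#}, insert (i,s+1) T) p)"
  by (simp add: Hh_def)
lemma Dd_eq: "Dd i F (k,M,T) p = (\<Sum>s\<in>Sd i (k,M,T). sg T (i,s+1) * (real (count M (i,s)) + 1) * F (k, add_mset (i,s) M, T - {(i,s+1)}) p)"
  by (simp add: Dd_def)

lemma Hh_cong:
  assumes "valid_mono (k,M,T)" "\<And>y. valid_mono y \<Longrightarrow> Nsame y (k,M,T) \<Longrightarrow> F y p = G y p"
  shows "Hh i F (k,M,T) p = Hh i G (k,M,T) p"
proof -
  have fT: "finite T" using assms(1) by (simp add: valid_mono_def)
  have *: "F (k, M - {#(i,s)#}, insert (i,s+1) T) p = G (k, M - {#(i,s)#}, insert (i,s+1) T) p"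
    if s': "s \<in> Sh i (k,M,T)" for s
  proof -
    have "valid_mono (k, M - {#(i,s)#}, insert (i,s+1) T)"
      using assms(1) s' by (auto simp: valid_mono_def Sh_def dest: in_diffD)
    moreover have "Nsame (k, M - {#(i,s)#}, insert (i,s+1) T) (k,M,T)"
      using Nn_h[OF fT s'] by (simp add: Nsame_def)
    ultimately show ?thesis using assms(2) by simp
  qed
  show ?thesis unfolding Hh_eq by (rule sum.cong) (simp_all add: *[simplified])
qed

lemma Dd_invalid:
  assumes "\<not> valid_mono (k,M,T)" "\<And>y. \<not> valid_mono y \<Longrightarrow> F y p = 0"
  shows "Dd i F (k,M,T) p = 0"
  unfolding Dd_def
proof (intro sum.neutral ballI)
  fix s assume s: "s \<in> Sd i (k,M,T)"
  have "\<not> valid_mono (k, add_mset (i,s) M, T - {(i,s+1)})"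
    using assms(1) s by (auto simp: valid_mono_def Sd_def)
  then show "sg (mth (k,M,T)) (i,s+1) * (real (count (mev (k,M,T)) (i,s)) + 1) * F (mlam (k,M,T), add_mset (i,s) (mev (k,M,T)), mth (k,M,T) - {(i,s+1)}) p = 0"
    using assms(2) by simp
qed

lemma Hh_invalid:
  assumes "\<not> valid_mono (k,M,T)" "\<And>y. \<not> valid_mono y \<Longrightarrow> F y p = 0"
  shows "Hh i F (k,M,T) p = 0"
  unfolding Hh_def
proof (intro sum.neutral ballI)
  fix s assume s: "s \<in> Sh i (k,M,T)"
  have "\<not> valid_mono (k, M - {#(i,s)#}, insert (i,s+1) T)"
  proof
    assume v: "valid_mono (k, M - {#(i,s)#}, insert (i,s+1) T)"
    have "\<forall>w\<in>#M. 1 \<le> snd w"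
    proof
      fix w assume w: "w \<in># M"
      show "1 \<le> snd w"
      proof (cases "w = (i,s)")
        case True then show ?thesis using s by (simp add: Sh_def)
      next
        case False
        then have "w \<in># M - {#(i,s)#}" using w by (simp add: in_diff_count)
        then show ?thesis using v by (simp add: valid_mono_def)
      qed
    qed
    then show False using v assms(1) by (simp add: valid_mono_def)
  qed
  then show "sg (mth (k,M,T)) (i,s+1) * F (mlam (k,M,T), mev (k,M,T) - {#(i,s)#}, insert (i,s+1) (mth (k,M,T))) p = 0"
    using assms(2) by simp
qed

lemma Dd_zero: assumes "finite T" "Nn i (k,M,T) = 0" shows "Dd i F (k,M,T) p = 0"
proof -
  have "Sd i (k,M,T) = {}" using assms finite_Sd[of "(k,M,T)" i] by (simp add: Nn_def)
  then show ?thesis by (simp add: Dd_def)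
qed

lemma Hh_zero: assumes "Nn i (k,M,T) = 0" shows "Hh i F (k,M,T) p = 0"
proof -
  have "Sh i (k,M,T) = {}"
  proof (rule ccontr)
    assume "Sh i (k,M,T) \<noteq> {}"
    then obtain s where "1 \<le> s" "(i,s) \<in># M" by (auto simp: Sh_def)
    then have "(i,s) \<in># filter_mset (\<lambda>v. fst v = i \<and> 1 \<le> snd v) M" by simp
    then show False using assms by (auto simp: Nn_def)
  qed
  then show ?thesis by (simp add: Hh_def)
qed

lemma Dd_cmul: "Dd i (\<lambda>y p. g p * F y p) x p = g p * Dd i F x p"
  by (simp add: Dd_def sum_distrib_left algebra_simps)
lemma Hh_cmul: "Hh i (\<lambda>y p. g p * F y p) x p = g p * Hh i F x p"
  by (simp add: Hh_def sum_distrib_left algebra_simps)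
lemma Dd_add: "Dd i (\<lambda>y p. F y p + G y p) x p = Dd i F x p + Dd i G x p"
  by (simp add: Dd_def sum.distrib algebra_simps)
lemma Hh_add: "Hh i (\<lambda>y p. F y p + G y p) x p = Hh i F x p + Hh i G x p"
  by (simp add: Hh_def sum.distrib algebra_simps)
lemma Dd_diff: "Dd i (\<lambda>y p. F y p - G y p) x p = Dd i F x p - Dd i G x p"
  by (simp add: Dd_def sum_subtractf algebra_simps)
lemma Hh_diff: "Hh i (\<lambda>y p. F y p - G y p) x p = Hh i F x p - Hh i G x p"
  by (simp add: Hh_def sum_subtractf algebra_simps)
lemma Dd_sum: "Dd i (\<lambda>y p. \<Sum>j\<in>J. F j y p) x p = (\<Sum>j\<in>J. Dd i (F j) x p)"
  by (simp add: Dd_def sum_distrib_left sum.swap[of _ J])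
lemma Dd_lam: "Dd i (\<lambda>y p. if mlam y = 0 then 0 else F (mlam y - 1, mev y, mth y) p) (k,M,T) p
   = (if k = 0 then 0 else Dd i F (k - 1, M, T) p)"
  by (simp add: Dd_def Sd_def)
lemma Hh_lam: "Hh i (\<lambda>y p. if mlam y = 0 then 0 else F (mlam y - 1, mev y, mth y) p) (k,M,T) p
   = (if k = 0 then 0 else Hh i F (k - 1, M, T) p)"
  by (simp add: Hh_def Sh_def)


definition Gm :: "('n::{finite,linorder} \<Rightarrow> (real,'n) vec \<Rightarrow> real) \<Rightarrow> 'n \<Rightarrow> 'n series \<Rightarrow> 'n series" where
  "Gm f i F x p = p $ i * f i p * F x p - (if mlam x = 0 then 0 else f i p * F (mlam x - 1, mev x, mth x) p)"

lemma Delta_Gm: "Delta f F x p = (\<Sum>i\<in>UNIV. Gm f i (Dd i F) x p)"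
proof -
  obtain k M T where x: "x = (k,M,T)" by (cases x)
  have "(\<Sum>s\<in>{s. 1 \<le> s \<and> (i, s + 1) \<in> T}. Dterm f i s F (k,M,T) p) = Gm f i (dhat i F) (k,M,T) p" for i
    by (cases k) (simp_all add: Dterm_def Let_def Gm_def dhat_def lammul_def funmul_def sum_subtractf sum_distrib_left)
  then show ?thesis unfolding x dhat_Dd[symmetric] by (simp add: Delta_def)
qed

definition Nset :: "'n mono \<Rightarrow> 'n set" where "Nset x = {j. 0 < Nn j x}"

definition Proj :: "'n set \<Rightarrow> 'n series \<Rightarrow> 'n series" where
  "Proj S F x p = (if Nset x = S then F x p else 0)"

definition suppS :: "'n set \<Rightarrow> 'n series \<Rightarrow> bool" where
  "suppS S F \<longleftrightarrow> (\<forall>y p. valid_mono y \<longrightarrow> Nset y \<noteq> S \<longrightarrow> F y p = 0)"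

definition invz :: "'n series \<Rightarrow> bool" where
  "invz F \<longleftrightarrow> (\<forall>y p. \<not> valid_mono y \<longrightarrow> F y p = 0)"

lemma Nsame_Nset: "Nsame y x \<Longrightarrow> Nset y = Nset x" by (simp add: Nsame_def Nset_def)

lemma Nn_k: "Nn j (k', M, T) = Nn j (k, M, T)" by (simp add: Nn_def Sd_def)
lemma Nset_k: "Nset (k', M, T) = Nset (k, M, T)" by (simp add: Nset_def Nn_k[of _ k' M T k])
lemma valid_k: "valid_mono (k', M, T) = valid_mono (k, M, T)" by (simp add: valid_mono_def)

lemma Dd_scaleN:
  assumes "valid_mono (k,M,T)" "\<And>y. Nsame y (k,M,T) \<Longrightarrow> \<phi> y = \<phi> (k,M,T)"
  shows "Dd i (\<lambda>y p. \<phi> y * F y p) (k,M,T) p = \<phi> (k,M,T) * Dd i F (k,M,T) p"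
proof -
  have "Dd i (\<lambda>y p. \<phi> y * F y p) (k,M,T) p = Dd i (\<lambda>y p. \<phi> (k,M,T) * F y p) (k,M,T) p"
    by (rule Dd_cong[OF assms(1)]) (simp add: assms(2))
  also have "\<dots> = \<phi> (k,M,T) * Dd i F (k,M,T) p" by (rule Dd_cmul[of i "\<lambda>_. \<phi> (k,M,T)"])
  finally show ?thesis .
qed

lemma Hh_scaleN:
  assumes "valid_mono (k,M,T)" "\<And>y. Nsame y (k,M,T) \<Longrightarrow> \<phi> y = \<phi> (k,M,T)"
  shows "Hh i (\<lambda>y p. \<phi> y * F y p) (k,M,T) p = \<phi> (k,M,T) * Hh i F (k,M,T) p"
proof -
  have "Hh i (\<lambda>y p. \<phi> y * F y p) (k,M,T) p = Hh i (\<lambda>y p. \<phi> (k,M,T) * F y p) (k,M,T) p"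
    by (rule Hh_cong[OF assms(1)]) (simp add: assms(2))
  also have "\<dots> = \<phi> (k,M,T) * Hh i F (k,M,T) p" by (rule Hh_cmul[of i "\<lambda>_. \<phi> (k,M,T)"])
  finally show ?thesis .
qed

lemma Dd_zero_fun: "Dd i (\<lambda>y p. 0) x p = 0" by (simp add: Dd_def)
lemma Hh_zero_fun: "Hh i (\<lambda>y p. 0) x p = 0" by (simp add: Hh_def)
lemma Dd_zero_at: "(\<And>y. F y p = 0) \<Longrightarrow> Dd i F x p = 0" by (simp add: Dd_def)
lemma Hh_zero_at: "(\<And>y. F y p = 0) \<Longrightarrow> Hh i F x p = 0" by (simp add: Hh_def)

lemma Dd_out:
  assumes "valid_mono (k,M,T)" "Nset (k,M,T) \<noteq> S" "suppS S F"
  shows "Dd i F (k,M,T) p = 0"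
proof -
  have "Dd i F (k,M,T) p = Dd i (\<lambda>y p. 0) (k,M,T) p"
  proof (rule Dd_cong[OF assms(1)])
    fix y assume v: "valid_mono y" and ns: "Nsame y (k,M,T)"
    then have "Nset y \<noteq> S" using assms(2) Nsame_Nset by metis
    then show "F y p = (\<lambda>y p. 0) y p" using assms(3) v unfolding suppS_def by blast
  qed
  then show ?thesis by (simp add: Dd_zero_fun)
qed

lemma Hh_out:
  assumes "valid_mono (k,M,T)" "Nset (k,M,T) \<noteq> S" "suppS S F"
  shows "Hh i F (k,M,T) p = 0"
proof -
  have "Hh i F (k,M,T) p = Hh i (\<lambda>y p. 0) (k,M,T) p"
  proof (rule Hh_cong[OF assms(1)])
    fix y assume v: "valid_mono y" and ns: "Nsame y (k,M,T)"
    then have "Nset y \<noteq> S" using assms(2) Nsame_Nset by metis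
    then show "F y p = (\<lambda>y p. 0) y p" using assms(3) v unfolding suppS_def by blast
  qed
  then show ?thesis by (simp add: Hh_zero_fun)
qed

lemma suppS_Dd: fixes F :: "'n::{finite,linorder} series" assumes "suppS S F" shows "suppS S (Dd i F)"
  unfolding suppS_def
proof (intro allI impI)
  fix y :: "'n mono" and p assume v: "valid_mono y" and n: "Nset y \<noteq> S"
  obtain k M T where y: "y = (k,M,T)" by (cases y)
  show "Dd i F y p = 0" using Dd_out[of k M T S F i p] v n assms y by simp
qed
lemma suppS_Hh: fixes F :: "'n::{finite,linorder} series" assumes "suppS S F" shows "suppS S (Hh i F)"
  unfolding suppS_def
proof (intro allI impI)
  fix y :: "'n mono" and p assume v: "valid_mono y" and n: "Nset y \<noteq> S"
  obtain k M T where y: "y = (k,M,T)" by (cases y)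
  show "Hh i F y p = 0" using Hh_out[of k M T S F i p] v n assms y by simp
qed
lemma invz_Dd: fixes F :: "'n::{finite,linorder} series" assumes "invz F" shows "invz (Dd i F)"
  unfolding invz_def
proof (intro allI impI)
  fix y :: "'n mono" and p assume v: "\<not> valid_mono y"
  obtain k M T where y: "y = (k,M,T)" by (cases y)
  have "\<And>y. \<not> valid_mono y \<Longrightarrow> F y p = 0" using assms unfolding invz_def by blast
  then show "Dd i F y p = 0" using Dd_invalid[of k M T F p i] v y by simp
qed
lemma invz_Hh: fixes F :: "'n::{finite,linorder} series" assumes "invz F" shows "invz (Hh i F)"
  unfolding invz_def
proof (intro allI impI)
  fix y :: "'n mono" and p assume v: "\<not> valid_mono y"
  obtain k M T where y: "y = (k,M,T)" by (cases y)
  have "\<And>y. \<not> valid_mono y \<Longrightarrow> F y p = 0" using assms unfolding invz_def by blast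
  then show "Hh i F y p = 0" using Hh_invalid[of k M T F p i] v y by simp
qed

lemma Gm_zero:
  assumes "valid_mono (k,M,T)" "Nn l (k,M,T) = 0"
  shows "Gm f l (Dd l F) (k,M,T) p = 0"
proof -
  have fT: "finite T" using assms(1) by (simp add: valid_mono_def)
  have "Nn l (k - 1, M, T) = 0" using assms(2) Nn_k[of l "k - 1" M T k] by simp
  then show ?thesis using Dd_zero[OF fT assms(2)] Dd_zero[OF fT] by (simp add: Gm_def)
qed

lemma Delta_sum_Nset:
  assumes "valid_mono (k,M,T)"
  shows "Delta f F (k,M,T) p = (\<Sum>l\<in>Nset (k,M,T). Gm f l (Dd l F) (k,M,T) p)"
proof -
  have "Delta f F (k,M,T) p = (\<Sum>l\<in>UNIV. Gm f l (Dd l F) (k,M,T) p)" by (rule Delta_Gm)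
  also have "\<dots> = (\<Sum>l\<in>Nset (k,M,T). Gm f l (Dd l F) (k,M,T) p)"
    by (rule sum.mono_neutral_right) (auto simp: Nset_def Gm_zero[OF assms])
  finally show ?thesis .
qed

lemma lam_zero:
  fixes W :: "nat \<Rightarrow> real"
  assumes "\<And>k. Nb < k \<Longrightarrow> W k = 0" "\<And>k. W k = u * W (Suc k)"
  shows "W k = 0"
proof (induction "Nb - k" arbitrary: k)
  case 0
  then have "W (Suc k) = 0" using assms(1) by simp
  then show ?case using assms(2)[of k] by simp
next
  case (Suc d)
  then have "W (Suc k) = 0" using Suc.hyps(1)[of "Suc k"] by simp
  then show ?case using assms(2)[of k] by simp
qed


definition Kk :: "'n::{finite,linorder} \<Rightarrow> 'n series \<Rightarrow> 'n series" where
  "Kk i F x p = Hh i F x p / real (Nn i x)"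

definition evl :: "'n::{finite,linorder} \<Rightarrow> nat \<Rightarrow> 'n series \<Rightarrow> 'n series" where
  "evl i Nb Y x p = (if mlam x = 0 then (\<Sum>j\<le>Nb. (p $ i) ^ j * Y (j, mev x, mth x) p) else 0)"

definition Qd :: "'n::{finite,linorder} \<Rightarrow> nat \<Rightarrow> 'n series \<Rightarrow> 'n series" where
  "Qd i Nb Y x p = - (\<Sum>j\<in>{mlam x<..Nb}. (p $ i) ^ (j - mlam x - 1) * Y (j, mev x, mth x) p)"

definition Lop :: "'n::{finite,linorder} \<Rightarrow> 'n series \<Rightarrow> 'n series" where
  "Lop i F x p = p $ i * F x p - (if mlam x = 0 then 0 else F (mlam x - 1, mev x, mth x) p)"

lemma poly_step:
  fixes y :: "nat \<Rightarrow> real"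
  assumes "\<And>j. Nb < j \<Longrightarrow> y j = 0"
  shows "u * (- (\<Sum>j\<in>{Suc k<..Nb}. u ^ (j - Suc k - 1) * y j)) - (- (\<Sum>j\<in>{k<..Nb}. u ^ (j - k - 1) * y j)) = y (Suc k)"
proof (cases "Suc k \<le> Nb")
  case True
  have e: "{k<..Nb} = insert (Suc k) {Suc k<..Nb}" using True by auto
  have "(\<Sum>j\<in>{k<..Nb}. u ^ (j - k - 1) * y j) = y (Suc k) + (\<Sum>j\<in>{Suc k<..Nb}. u ^ (j - k - 1) * y j)"
    unfolding e by (subst sum.insert) auto
  moreover have "(\<Sum>j\<in>{Suc k<..Nb}. u ^ (j - k - 1) * y j) = u * (\<Sum>j\<in>{Suc k<..Nb}. u ^ (j - Suc k - 1) * y j)"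
    unfolding sum_distrib_left
  proof (rule sum.cong[OF refl])
    fix j assume "j \<in> {Suc k<..Nb}"
    then have "j - k - 1 = Suc (j - Suc k - 1)" by auto
    then show "u ^ (j - k - 1) * y j = u * (u ^ (j - Suc k - 1) * y j)" by simp
  qed
  ultimately show ?thesis by simp
next
  case False
  then have "{Suc k<..Nb} = {}" "{k<..Nb} = {}" by auto
  then show ?thesis using assms[of "Suc k"] False by simp
qed

lemma poly_zero:
  fixes y :: "nat \<Rightarrow> real"
  shows "u * (- (\<Sum>j\<in>{0<..Nb}. u ^ (j - 0 - 1) * y j)) = y 0 - (\<Sum>j\<le>Nb. u ^ j * y j)"
proof -
  have e: "{..Nb} = insert 0 {0<..Nb}" by auto
  have "(\<Sum>j\<le>Nb. u ^ j * y j) = y 0 + (\<Sum>j\<in>{0<..Nb}. u ^ j * y j)"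
    unfolding e by (subst sum.insert) auto
  moreover have "(\<Sum>j\<in>{0<..Nb}. u ^ j * y j) = u * (\<Sum>j\<in>{0<..Nb}. u ^ (j - 0 - 1) * y j)"
    unfolding sum_distrib_left
  proof (rule sum.cong[OF refl])
    fix j :: nat assume "j \<in> {0<..Nb}"
    then have "j = Suc (j - 0 - 1)" by auto
    then show "u ^ j * y j = u * (u ^ (j - 0 - 1) * y j)" by (metis mult.assoc power_Suc)
  qed
  ultimately show ?thesis by simp
qed

lemma Lop_Qd:
  assumes "\<And>j. Nb < j \<Longrightarrow> Y (j,M,T) p = 0"
  shows "Lop i (Qd i Nb Y) (k,M,T) p = Y (k,M,T) p - evl i Nb Y (k,M,T) p"
proof (cases k)
  case 0
  then show ?thesis using poly_zero[where u="p $ i" and Nb=Nb and y="\<lambda>j. Y (j,M,T) p"]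
    by (simp add: Lop_def Qd_def evl_def)
next
  case (Suc k')
  then show ?thesis using poly_step[where Nb=Nb and y="\<lambda>j. Y (j,M,T) p" and u="p $ i" and k=k'] assms
    by (simp add: Lop_def Qd_def evl_def)
qed

lemma Gm_Lop: "Gm f i F x p = f i p * Lop i F x p"
  by (simp add: Gm_def Lop_def algebra_simps)

lemma Dd_Lop: "Dd l (Lop i F) (k,M,T) p = Lop i (Dd l F) (k,M,T) p"
  by (cases k) (simp_all add: Dd_eq Lop_def Sd_def sum_subtractf sum_distrib_left algebra_simps)

lemma Hh_Gm: "Hh m (Gm f l G) (k,M,T) p = Gm f l (Hh m G) (k,M,T) p"
  by (cases k) (simp_all add: Hh_eq Gm_def Sh_def sum_subtractf sum_distrib_left algebra_simps)

lemma Kk_Gm: "Kk m (Gm f l G) (k,M,T) p = Gm f l (Kk m G) (k,M,T) p"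
proof -
  have "Nn m (k - 1, M, T) = Nn m (k, M, T)" by (rule Nn_k)
  then show ?thesis unfolding Kk_def Hh_Gm by (simp add: Gm_def diff_divide_distrib)
qed

lemma Hh_sum: "Hh i (\<lambda>y p. \<Sum>j\<in>J. F j y p) x p = (\<Sum>j\<in>J. Hh i (F j) x p)"
  by (simp add: Hh_def sum_distrib_left sum.swap[of _ J])

lemma Kk_sum: "Kk i (\<lambda>y p. \<Sum>j\<in>J. F j y p) x p = (\<Sum>j\<in>J. Kk i (F j) x p)"
  by (simp add: Kk_def Hh_sum sum_divide_distrib)

lemma Dd_Kk:
  assumes "valid_mono (k,M,T)"
  shows "Dd l (Kk m F) (k,M,T) p = Dd l (Hh m F) (k,M,T) p / real (Nn m (k,M,T))"
proof -
  have "Kk m F = (\<lambda>y p. (1 / real (Nn m y)) * Hh m F y p)" by (auto simp: Kk_def fun_eq_iff)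
  then have "Dd l (Kk m F) (k,M,T) p = Dd l (\<lambda>y p. (1 / real (Nn m y)) * Hh m F y p) (k,M,T) p"
    by simp
  also have "\<dots> = (1 / real (Nn m (k,M,T))) * Dd l (Hh m F) (k,M,T) p"
    by (rule Dd_scaleN[OF assms]) (simp add: Nsame_def)
  finally show ?thesis by simp
qed

lemma Dd_Kk_formula:
  assumes "valid_mono (k,M,T)" "0 < Nn m (k,M,T)"
  shows "Dd l (Kk m F) (k,M,T) p = (if l = m then F (k,M,T) p else 0) - Kk m (Dd l F) (k,M,T) p"
proof -
  have fT: "finite T" using assms(1) by (simp add: valid_mono_def)
  have "Dd l (Hh m F) (k,M,T) p = (if l = m then real (Nn m (k,M,T)) * F (k,M,T) p else 0) - Hh m (Dd l F) (k,M,T) p"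
    using euler[OF fT, of m F k M p] cross[OF fT, of l m F k M p] by (cases "l = m") (simp_all add: algebra_simps)
  then show ?thesis unfolding Dd_Kk[OF assms(1)] using assms(2)
    by (simp add: Kk_def diff_divide_distrib)
qed

lemma Gm_cong:
  assumes "F (k,M,T) p = G (k,M,T) p" "0 < k \<Longrightarrow> F (k - 1,M,T) p = G (k - 1,M,T) p"
  shows "Gm f l F (k,M,T) p = Gm f l G (k,M,T) p"
  using assms by (simp add: Gm_def)


definition SM :: "(real^'n) set \<Rightarrow> 'n series \<Rightarrow> bool" where
  "SM U F \<longleftrightarrow> (\<forall>x. smooth_on U (F x) \<and> (\<forall>p. p \<notin> U \<longrightarrow> F x p = 0))"

definition lamb :: "nat \<Rightarrow> 'n series \<Rightarrow> bool" where
  "lamb N F \<longleftrightarrow> (\<forall>x p. N < mlam x \<longrightarrow> F x p = 0)"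

lemma Alam_iff: "F \<in> Alam U \<longleftrightarrow> SM U F \<and> invz F \<and> (\<exists>N. lamb N F)"
  unfolding Alam_def SM_def invz_def lamb_def by (auto simp: fun_eq_iff)

lemma SM_Proj: assumes "SM U F" "open U" shows "SM U (Proj S F)"
  unfolding SM_def
proof (intro allI conjI impI)
  fix x :: "'a mono"
  show "smooth_on U (Proj S F x)"
  proof (cases "Nset x = S")
    case True
    then have "Proj S F x = F x" by (auto simp: Proj_def fun_eq_iff)
    then show ?thesis using assms(1) unfolding SM_def by metis
  next
    case False
    then have "Proj S F x = (\<lambda>p. 0)" by (auto simp: Proj_def fun_eq_iff)
    then show ?thesis using assms(2) by (simp add: smooth_const)
  qed
  fix p assume "p \<notin> U"
  moreover have "\<forall>p. p \<notin> U \<longrightarrow> F x p = 0" using assms(1) unfolding SM_def by blast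
  ultimately show "Proj S F x p = 0" by (simp add: Proj_def)
qed

lemma SM_Hh: assumes "SM U F" "open U" shows "SM U (Hh i F)"
  unfolding SM_def
proof (intro allI conjI impI)
  fix x :: "'a mono"
  obtain k M T where x: "x = (k,M,T)" by (cases x)
  show "smooth_on U (Hh i F x)"
    unfolding x Hh_eq[abs_def]
    by (intro smooth_sum smooth_mult smooth_const assms(2)) (use assms(1) in \<open>simp add: SM_def\<close>)
  fix p assume "p \<notin> U"
  then show "Hh i F x p = 0" using assms(1) by (simp add: SM_def Hh_def)
qed

lemma SM_Dd: assumes "SM U F" "open U" shows "SM U (Dd i F)"
  unfolding SM_def
proof (intro allI conjI impI)
  fix x :: "'a mono"
  obtain k M T where x: "x = (k,M,T)" by (cases x)
  show "smooth_on U (Dd i F x)"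
    unfolding x Dd_eq[abs_def]
    by (intro smooth_sum smooth_mult smooth_const assms(2)) (use assms(1) in \<open>simp add: SM_def\<close>)
  fix p assume "p \<notin> U"
  then show "Dd i F x p = 0" using assms(1) by (simp add: SM_def Dd_def)
qed

lemma SM_Kk: assumes "SM U F" "open U" shows "SM U (Kk i F)"
proof -
  have "Kk i F = (\<lambda>x p. (1 / real (Nn i x)) * Hh i F x p)" by (auto simp: Kk_def fun_eq_iff)
  moreover have "SM U (\<lambda>x p. (1 / real (Nn i x)) * Hh i F x p)"
    unfolding SM_def
  proof (intro allI conjI impI)
    fix x :: "'a mono"
    have "smooth_on U (Hh i F x)" using SM_Hh[OF assms] unfolding SM_def by blast
    then show "smooth_on U (\<lambda>p. (1 / real (Nn i x)) * Hh i F x p)"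
      by (rule smooth_mult[OF assms(2) smooth_const[OF assms(2)]])
    fix p assume "p \<notin> U"
    moreover have "\<forall>p. p \<notin> U \<longrightarrow> Hh i F x p = 0" using SM_Hh[OF assms] unfolding SM_def by blast
    ultimately show "(1 / real (Nn i x)) * Hh i F x p = 0" by simp
  qed
  ultimately show ?thesis by simp
qed

lemma SM_cmul: assumes "SM U F" "open U" "smooth_on U g" shows "SM U (\<lambda>x p. g p * F x p)"
  using assms unfolding SM_def by (auto intro!: smooth_mult)

lemma SM_add: assumes "SM U F" "SM U G" "open U" shows "SM U (\<lambda>x p. F x p + G x p)"
  using assms unfolding SM_def by (auto intro!: smooth_add)

lemma SM_sum: assumes "\<And>j. j \<in> J \<Longrightarrow> SM U (F j)" "open U" shows "SM U (\<lambda>x p. \<Sum>j\<in>J. F j x p)"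
  using assms unfolding SM_def by (auto intro!: smooth_sum)

lemma SM_evl: assumes "SM U Y" "open U" shows "SM U (evl i Nb Y)"
  unfolding SM_def
proof (intro allI conjI impI)
  fix x :: "'a mono"
  show "smooth_on U (evl i Nb Y x)"
  proof (cases "mlam x = 0")
    case True
    have "smooth_on U (\<lambda>p. \<Sum>j\<le>Nb. (p $ i) ^ j * Y (j, mev x, mth x) p)"
      by (intro smooth_sum smooth_mult smooth_power smooth_coord assms(2)) (use assms(1) in \<open>simp add: SM_def\<close>)
    then show ?thesis using True by (simp add: evl_def[abs_def])
  next
    case False then show ?thesis by (simp add: evl_def[abs_def] smooth_const assms(2))
  qed
  fix p assume "p \<notin> U"
  then show "evl i Nb Y x p = 0" using assms(1) by (simp add: SM_def evl_def)
qed

lemma SM_Qd: assumes "SM U Y" "open U" shows "SM U (Qd i Nb Y)"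
  unfolding SM_def
proof (intro allI conjI impI)
  fix x :: "'a mono"
  have "smooth_on U (\<lambda>p. (-1) * (\<Sum>j\<in>{mlam x<..Nb}. (p $ i) ^ (j - mlam x - 1) * Y (j, mev x, mth x) p))"
    by (intro smooth_sum smooth_mult smooth_power smooth_coord smooth_const assms(2)) (use assms(1) in \<open>simp add: SM_def\<close>)
  then show "smooth_on U (Qd i Nb Y x)" by (simp add: Qd_def[abs_def])
  fix p assume "p \<notin> U"
  then show "Qd i Nb Y x p = 0" using assms(1) by (simp add: SM_def Qd_def)
qed

lemma invz_Proj: "invz F \<Longrightarrow> invz (Proj S F)" by (simp add: invz_def Proj_def)
lemma invz_Kk: "invz F \<Longrightarrow> invz (Kk i F)"
  using invz_Hh[of F i] by (simp add: invz_def Kk_def)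
lemma invz_evl: "invz Y \<Longrightarrow> invz (evl i Nb Y)"
  unfolding invz_def evl_def by (auto simp: valid_mono_def)
lemma invz_Qd: "invz Y \<Longrightarrow> invz (Qd i Nb Y)"
  unfolding invz_def Qd_def by (auto simp: valid_mono_def)

lemma suppS_Proj: "suppS S (Proj S F)" by (simp add: suppS_def Proj_def)
lemma suppS_Kk: "suppS S F \<Longrightarrow> suppS S (Kk i F)"
  using suppS_Hh[of S F i] by (simp add: suppS_def Kk_def)
lemma Nset_triple: "Nset (j, mev x, mth x) = Nset x"
  by (cases x) (simp add: Nset_k)
lemma valid_triple: "valid_mono (j, mev x, mth x) = valid_mono x"
  by (cases x) (simp add: valid_mono_def)
lemma suppS_evl: assumes "suppS S Y" shows "suppS S (evl i Nb Y)"
  unfolding suppS_def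
proof (intro allI impI)
  fix y :: "'a mono" and p assume v: "valid_mono y" and n: "Nset y \<noteq> S"
  have "Y (j, mev y, mth y) p = 0" for j
    using assms v n Nset_triple[of j y] valid_triple[of j y] unfolding suppS_def by metis
  then show "evl i Nb Y y p = 0" by (simp add: evl_def)
qed
lemma suppS_Qd: assumes "suppS S Y" shows "suppS S (Qd i Nb Y)"
  unfolding suppS_def
proof (intro allI impI)
  fix y :: "'a mono" and p assume v: "valid_mono y" and n: "Nset y \<noteq> S"
  have "Y (j, mev y, mth y) p = 0" for j
    using assms v n Nset_triple[of j y] valid_triple[of j y] unfolding suppS_def by metis
  then show "Qd i Nb Y y p = 0" by (simp add: Qd_def)
qed

lemma lamb_Proj: "lamb N F \<Longrightarrow> lamb N (Proj S F)" by (simp add: lamb_def Proj_def)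
lemma lamb_Hh: "lamb N F \<Longrightarrow> lamb N (Hh i F)" by (simp add: lamb_def Hh_def)
lemma lamb_Dd: "lamb N F \<Longrightarrow> lamb N (Dd i F)" by (simp add: lamb_def Dd_def)
lemma lamb_Kk: "lamb N F \<Longrightarrow> lamb N (Kk i F)" by (simp add: lamb_def Kk_def Hh_def)
lemma lamb_Qd: "lamb N (Qd i N Y)" by (simp add: lamb_def Qd_def)
lemma lamb_evl: "lamb 0 (evl i Nb Y)" by (simp add: lamb_def evl_def)
lemma lamb_mono: "lamb N F \<Longrightarrow> N \<le> N' \<Longrightarrow> lamb N' F" by (simp add: lamb_def)

lemma Nset_char:
  assumes "valid_mono x" "j \<notin> Nset x"
  shows "(\<forall>s. 1 \<le> s \<longrightarrow> (j,s) \<notin># mev x) \<and> (\<forall>s. 2 \<le> s \<longrightarrow> (j,s) \<notin> mth x)"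
proof -
  obtain k M T where x: "x = (k,M,T)" by (cases x)
  have fT: "finite T" using assms(1) x by (simp add: valid_mono_def)
  have N0: "Nn j x = 0" using assms(2) by (simp add: Nset_def)
  then have Sd0: "Sd j (k,M,T) = {}" using finite_Sd[of "(k,M,T)" j] fT x by (simp add: Nn_def)
  have F0: "filter_mset (\<lambda>v. fst v = j \<and> 1 \<le> snd v) M = {#}" using N0 x by (simp add: Nn_def)
  have A: "(j,s) \<notin># M" if "1 \<le> s" for s
    using F0 that by (auto simp: filter_mset_eq_mempty_iff)
  have B: "(j,s) \<notin> T" if "2 \<le> s" for s
  proof
    assume "(j,s) \<in> T"
    then have "s - 1 \<in> Sd j (k,M,T)" using that by (simp add: Sd_def)
    then show False using Sd0 by simp
  qed
  show ?thesis using A B x by simp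
qed

lemma Nset_sub:
  assumes "valid_mono x" "\<forall>v\<in>#mev x. fst v = i" "mth x \<subseteq> {v. snd v \<le> 1} \<union> {v. fst v = i \<and> 2 \<le> snd v}"
  shows "Nset x \<subseteq> {i}"
proof
  fix j assume j: "j \<in> Nset x"
  show "j \<in> {i}"
  proof (rule ccontr)
    assume ji: "j \<notin> {i}"
    obtain k M T where x: "x = (k,M,T)" by (cases x)
    have "filter_mset (\<lambda>v. fst v = j \<and> 1 \<le> snd v) M = {#}"
      using assms(2) ji x by (auto simp: filter_mset_eq_mempty_iff)
    moreover have "Sd j (k,M,T) = {}" using assms(3) ji x by (auto simp: Sd_def)
    ultimately have "Nn j x = 0" using x by (simp add: Nn_def)
    then show False using j by (simp add: Nset_def)
  qed
qed

lemma Nset_empty: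
  assumes "mev x = {#}" "mth x \<subseteq> {v. snd v \<le> 1}"
  shows "Nset x = {}"
proof -
  obtain k M T where x: "x = (k,M,T)" by (cases x)
  have "Sd j (k,M,T) = {}" for j using assms x by (auto simp: Sd_def)
  then show ?thesis using assms x by (simp add: Nset_def Nn_def)
qed


lemma Gm_lin2: "Gm f l (\<lambda>y p. c1 p * ((if b1 then P y p else 0) - A y p) + c2 p * ((if b2 then P y p else 0) - B y p)) x p
  = c1 p * ((if b1 then Gm f l P x p else 0) - Gm f l A x p) + c2 p * ((if b2 then Gm f l P x p else 0) - Gm f l B x p)"
  by (cases b1; cases b2) (simp_all add: Gm_def algebra_simps)

lemma Kk_zero_valid:
  assumes "valid_mono (k,M,T)" "\<And>y. valid_mono y \<Longrightarrow> F y p = 0"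
  shows "Kk m F (k,M,T) p = 0"
proof -
  have "Hh m F (k,M,T) p = Hh m (\<lambda>y p. 0) (k,M,T) p"
    by (rule Hh_cong[OF assms(1)]) (simp add: assms(2))
  then show ?thesis by (simp add: Kk_def Hh_zero_fun)
qed

lemma Dd_cong_p: "(\<And>y. F y p = G y p) \<Longrightarrow> Dd i F x p = Dd i G x p"
  by (simp add: Dd_def)

lemma sum_lin2:
  fixes X A B :: "'a \<Rightarrow> real"
  assumes "finite I" "m1 \<in> I" "m2 \<in> I"
  shows "(\<Sum>l\<in>I. c1 * ((if l = m1 then X l else 0) - A l) + c2 * ((if l = m2 then X l else 0) - B l))
     = c1 * (X m1 - sum A I) + c2 * (X m2 - sum B I)"
proof -
  have "(\<Sum>l\<in>I. c1 * ((if l = m1 then X l else 0) - A l) + c2 * ((if l = m2 then X l else 0) - B l))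
     = c1 * ((\<Sum>l\<in>I. if l = m1 then X l else 0) - sum A I) + c2 * ((\<Sum>l\<in>I. if l = m2 then X l else 0) - sum B I)"
    by (simp add: sum.distrib sum_subtractf flip: sum_distrib_left)
  also have "(\<Sum>l\<in>I. if l = m1 then X l else 0) = X m1" using assms by (simp add: sum.delta)
  also have "(\<Sum>l\<in>I. if l = m2 then X l else 0) = X m2" using assms by (simp add: sum.delta)
  finally show ?thesis .
qed

lemma homotopy:
  fixes f :: "'n::{finite,linorder} \<Rightarrow> (real,'n) vec \<Rightarrow> real"
  assumes v: "valid_mono (k,M,T)" and S: "Nset (k,M,T) = S" and m: "m1 \<in> S" "m2 \<in> S"
    and DP: "\<And>y. valid_mono y \<Longrightarrow> Delta f P y p = 0"
  shows "(\<Sum>l\<in>UNIV. Gm f l (Dd l (\<lambda>y p. c1 p * Kk m1 P y p + c2 p * Kk m2 P y p)) (k,M,T) p)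
       = c1 p * Gm f m1 P (k,M,T) p + c2 p * Gm f m2 P (k,M,T) p"
proof -
  define R where "R = (\<lambda>l y p. c1 p * ((if l = m1 then P y p else 0) - Kk m1 (Dd l P) y p) + c2 p * ((if l = m2 then P y p else 0) - Kk m2 (Dd l P) y p))"
  have DR: "Dd l (\<lambda>y p. c1 p * Kk m1 P y p + c2 p * Kk m2 P y p) (k',M,T) p = R l (k',M,T) p" for l k'
  proof -
    have v': "valid_mono (k',M,T)" using v valid_k[of k' M T k] by simp
    have N: "0 < Nn m1 (k',M,T)" "0 < Nn m2 (k',M,T)" using m S Nset_k[of k' M T k] by (auto simp: Nset_def)
    show ?thesis unfolding Dd_add Dd_cmul Dd_Kk_formula[OF v' N(1)] Dd_Kk_formula[OF v' N(2)] R_def by simp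
  qed
  have G: "Gm f l (Dd l (\<lambda>y p. c1 p * Kk m1 P y p + c2 p * Kk m2 P y p)) (k,M,T) p = Gm f l (R l) (k,M,T) p" for l
    by (rule Gm_cong) (simp_all only: DR)
  have G2: "Gm f l (R l) (k,M,T) p = c1 p * ((if l = m1 then Gm f l P (k,M,T) p else 0) - Gm f l (Kk m1 (Dd l P)) (k,M,T) p) + c2 p * ((if l = m2 then Gm f l P (k,M,T) p else 0) - Gm f l (Kk m2 (Dd l P)) (k,M,T) p)" for l
    unfolding R_def by (rule Gm_lin2)
  have K0: "(\<Sum>l\<in>UNIV. Gm f l (Kk m (Dd l P)) (k,M,T) p) = 0" for m
  proof -
    have "(\<Sum>l\<in>UNIV. Gm f l (Kk m (Dd l P)) (k,M,T) p) = (\<Sum>l\<in>UNIV. Kk m (Gm f l (Dd l P)) (k,M,T) p)"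
      by (simp add: Kk_Gm)
    also have "\<dots> = Kk m (\<lambda>y p. \<Sum>l\<in>UNIV. Gm f l (Dd l P) y p) (k,M,T) p" by (rule Kk_sum[symmetric])
    also have "(\<lambda>y p. \<Sum>l\<in>UNIV. Gm f l (Dd l P) y p) = Delta f P" by (simp add: Delta_Gm fun_eq_iff)
    also have "Kk m (Delta f P) (k,M,T) p = 0" by (rule Kk_zero_valid[OF v]) (rule DP)
    finally show ?thesis .
  qed
  have "(\<Sum>l\<in>UNIV. Gm f l (Dd l (\<lambda>y p. c1 p * Kk m1 P y p + c2 p * Kk m2 P y p)) (k,M,T) p)
     = (\<Sum>l\<in>UNIV. c1 p * ((if l = m1 then Gm f l P (k,M,T) p else 0) - Gm f l (Kk m1 (Dd l P)) (k,M,T) p) + c2 p * ((if l = m2 then Gm f l P (k,M,T) p else 0) - Gm f l (Kk m2 (Dd l P)) (k,M,T) p))"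
    by (simp only: G G2)
  also have "\<dots> = c1 p * (Gm f m1 P (k,M,T) p - (\<Sum>l\<in>UNIV. Gm f l (Kk m1 (Dd l P)) (k,M,T) p)) + c2 p * (Gm f m2 P (k,M,T) p - (\<Sum>l\<in>UNIV. Gm f l (Kk m2 (Dd l P)) (k,M,T) p))"
    by (rule sum_lin2[where X="\<lambda>l. Gm f l P (k,M,T) p"]) auto
  finally show ?thesis unfolding K0 by simp
qed

lemma cocycle:
  fixes f :: "'n::{finite,linorder} \<Rightarrow> (real,'n) vec \<Rightarrow> real"
  assumes v: "valid_mono (k,M,T)" and S: "Nset (k,M,T) = {i}" and fp: "f i p \<noteq> 0"
    and DZ: "\<And>y. Delta f Z y p = 0" and bd: "lamb Nb Z"
  shows "Dd i Z (k,M,T) p = 0"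
proof -
  define W where "W j = Dd i Z (j,M,T) p" for j
  have W0: "W j = 0" if "Nb < j" for j
    using lamb_Dd[OF bd, of i] that unfolding lamb_def W_def by simp
  have Wrec: "W j = p $ i * W (Suc j)" for j
  proof -
    have vj: "valid_mono (Suc j, M, T)" using v valid_k[of "Suc j" M T k] by simp
    have Sj: "Nset (Suc j, M, T) = {i}" using S Nset_k[of "Suc j" M T k] by simp
    have "0 = Delta f Z (Suc j, M, T) p" using DZ by simp
    also have "\<dots> = Gm f i (Dd i Z) (Suc j, M, T) p" unfolding Delta_sum_Nset[OF vj] Sj by simp
    also have "\<dots> = f i p * (p $ i * W (Suc j) - W j)" by (simp add: Gm_def W_def algebra_simps)
    finally have "f i p * (p $ i * W (Suc j) - W j) = 0" by simp
    then have "p $ i * W (Suc j) - W j = 0" using fp by simp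
    then show ?thesis by simp
  qed
  have "W k = 0" by (rule lam_zero[of Nb W "p $ i" k, OF W0 Wrec])
  then show ?thesis by (simp add: W_def)
qed

lemma singleton:
  fixes f :: "'n::{finite,linorder} \<Rightarrow> (real,'n) vec \<Rightarrow> real"
  assumes v: "valid_mono (k,M,T)" and S: "Nset (k,M,T) = {i}" and fp: "f i p \<noteq> 0"
    and DP0: "\<And>y. valid_mono y \<Longrightarrow> Dd i P y p = 0"
    and Yb: "\<And>j M T. Nb < j \<Longrightarrow> Kk i P (j,M,T) p = 0"
  shows "Gm f i (Dd i (\<lambda>y p. inverse (f i p) * Qd i Nb (Kk i P) y p)) (k,M,T) p
     = P (k,M,T) p - Dd i (evl i Nb (Kk i P)) (k,M,T) p"
proof -
  define Y where "Y = Kk i P"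
  define Q where "Q = Qd i Nb Y"
  define a where "a = evl i Nb Y"
  have "Gm f i (Dd i (\<lambda>y p. inverse (f i p) * Q y p)) (k,M,T) p = f i p * Lop i (Dd i (\<lambda>y p. inverse (f i p) * Q y p)) (k,M,T) p"
    by (rule Gm_Lop)
  also have "Lop i (Dd i (\<lambda>y p. inverse (f i p) * Q y p)) (k,M,T) p = inverse (f i p) * Lop i (Dd i Q) (k,M,T) p"
    unfolding Lop_def Dd_cmul by (simp add: algebra_simps)
  also have "Lop i (Dd i Q) (k,M,T) p = Dd i (Lop i Q) (k,M,T) p" by (rule Dd_Lop[symmetric])
  also have "\<dots> = Dd i (\<lambda>y p. Y y p - a y p) (k,M,T) p"
  proof (rule Dd_cong_p)
    fix y :: "'n mono"
    obtain k' M' T' where y: "y = (k',M',T')" by (cases y)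
    show "Lop i Q y p = Y y p - a y p"
      unfolding y Q_def a_def by (rule Lop_Qd) (use Yb in \<open>simp add: Y_def\<close>)
  qed
  also have "\<dots> = Dd i Y (k,M,T) p - Dd i a (k,M,T) p" by (rule Dd_diff)
  also have "Dd i Y (k,M,T) p = P (k,M,T) p"
  proof -
    have N: "0 < Nn i (k,M,T)" using S by (auto simp: Nset_def)
    have "Dd i Y (k,M,T) p = P (k,M,T) p - Kk i (Dd i P) (k,M,T) p"
      unfolding Y_def Dd_Kk_formula[OF v N] by simp
    also have "Kk i (Dd i P) (k,M,T) p = 0" by (rule Kk_zero_valid[OF v]) (rule DP0)
    finally show ?thesis by simp
  qed
  finally show ?thesis using fp by (simp add: Q_def a_def Y_def)
qed


lemma Ci_supp:
  assumes "a \<in> Ci U i" "valid_mono y" "a y p \<noteq> 0"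
  shows "Nset y \<subseteq> {i} \<and> mlam y = 0"
proof -
  have "a y \<noteq> (\<lambda>p. 0)" using assms(3) by auto
  then have "mlam y = 0 \<and> (\<forall>v\<in>#mev y. fst v = i) \<and> mth y \<subseteq> {v. snd v \<le> 1} \<union> {v. fst v = i \<and> 2 \<le> snd v}"
    using assms(1) unfolding Ci_def by blast
  then show ?thesis using Nset_sub[OF assms(2)] by blast
qed

lemma Clam_supp:
  assumes "c \<in> Clam U" "c y p \<noteq> 0"
  shows "Nset y = {}"
proof -
  have "c y \<noteq> (\<lambda>p. 0)" using assms(2) by auto
  then have "mev y = {#} \<and> mth y \<subseteq> {v. snd v \<le> 1}" using assms(1) unfolding Clam_def by blast
  then show ?thesis using Nset_empty by blast
qed

lemma Ci_lam:
  assumes "a \<in> Ci U i" "mlam y \<noteq> 0"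
  shows "a y p = 0"
proof (rule ccontr)
  assume "a y p \<noteq> 0"
  then have ne: "a y \<noteq> (\<lambda>p. 0)" by auto
  have "\<forall>x. a x \<noteq> (\<lambda>p. 0) \<longrightarrow> mlam x = 0" using assms(1) unfolding Ci_def by auto
  from this[rule_format, OF ne] show False using assms(2) by simp
qed

lemma Dd_a_lam:
  assumes "a \<in> Ci U i" "k \<noteq> 0"
  shows "Dd l a (k,M,T) p = 0"
  unfolding Dd_eq using Ci_lam[OF assms(1)] assms(2) by simp

lemma Dd_a_out:
  assumes a: "a \<in> Ci U i" and v: "valid_mono (k,M,T)" and n: "Nset (k,M,T) \<noteq> {i}"
  shows "Dd i a (k,M,T) p = 0"
proof (cases "Nset (k,M,T) = {}")
  case True
  then have "Nn i (k,M,T) = 0" by (auto simp: Nset_def)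
  then show ?thesis using Dd_zero v by (auto simp: valid_mono_def)
next
  case False
  have "Dd i a (k,M,T) p = Dd i (\<lambda>y p. 0) (k,M,T) p"
  proof (rule Dd_cong[OF v])
    fix y assume vy: "valid_mono y" and ns: "Nsame y (k,M,T)"
    have "Nset y = Nset (k,M,T)" by (rule Nsame_Nset[OF ns])
    then have "\<not> Nset y \<subseteq> {i}" using False n by auto
    then show "a y p = (\<lambda>y p. 0) y p" using Ci_supp[OF a vy] by auto
  qed
  then show ?thesis by (simp add: Dd_zero_fun)
qed

lemma Ci_Alam: "a \<in> Ci U i \<Longrightarrow> a \<in> Alam U" by (simp add: Ci_def)
lemma Clam_Alam: "c \<in> Clam U \<Longrightarrow> c \<in> Alam U" by (simp add: Clam_def)

lemma Gm_zero_at: "(\<And>y. F y p = 0) \<Longrightarrow> Gm f l F x p = 0" by (simp add: Gm_def)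

lemma part1:
  assumes "c \<in> Clam U"
  shows "Delta f c = (\<lambda>x p. 0)"
proof (intro ext)
  fix x p
  have D0: "Dd i c y q = 0" for i y q
  proof -
    obtain k M T where y: "y = (k,M,T)" by (cases y)
    have "c (k, add_mset (i,s) M, T') q = 0" for s T'
    proof (rule ccontr)
      assume "c (k, add_mset (i,s) M, T') q \<noteq> 0"
      then have ne: "c (k, add_mset (i,s) M, T') \<noteq> (\<lambda>p. 0)" by auto
      have "\<forall>x. c x \<noteq> (\<lambda>p. 0) \<longrightarrow> mev x = {#}" using assms unfolding Clam_def by auto
      from this[rule_format, OF ne] show False by simp
    qed
    then show ?thesis unfolding y Dd_eq by simp
  qed
  show "Delta f c x p = 0" unfolding Delta_Gm by (simp add: Gm_zero_at D0)
qed

lemma part2: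
  assumes a: "a \<in> Ci U i"
  shows "Delta f (dhat i a) = (\<lambda>x p. 0)"
proof (intro ext)
  fix x p
  have inv: "invz a" using Ci_Alam[OF a] by (simp add: Alam_iff)
  have D0: "Dd l (Dd i a) y p = 0" for l y
  proof -
    obtain k M T where y: "y = (k,M,T)" by (cases y)
    show ?thesis
    proof (cases "valid_mono (k,M,T)")
      case False
      then show ?thesis using invz_Dd[OF invz_Dd[OF inv]] y unfolding invz_def by blast
    next
      case v: True
      have fT: "finite T" using v by (simp add: valid_mono_def)
      show ?thesis
      proof (cases "l = i")
        case True then show ?thesis using dsq[OF fT] y by simp
      next
        case li: False
        show ?thesis
        proof (cases "l \<in> Nset (k,M,T)")
          case False
          then have "Nn l (k,M,T) = 0" by (simp add: Nset_def)
          then show ?thesis using Dd_zero[OF fT] y by simp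
        next
          case lN: True
          have "Dd l (Dd i a) (k,M,T) p = Dd l (\<lambda>y p. 0) (k,M,T) p"
          proof (rule Dd_cong[OF v])
            fix y' assume vy': "valid_mono y'" and ns': "Nsame y' (k,M,T)"
            obtain k' M' T' where y': "y' = (k',M',T')" by (cases y')
            have "Dd i a (k',M',T') p = Dd i (\<lambda>y p. 0) (k',M',T') p"
            proof (rule Dd_cong)
              show "valid_mono (k',M',T')" using vy' y' by simp
            next
              fix y'' assume vy'': "valid_mono y''" and ns'': "Nsame y'' (k',M',T')"
              have "l \<in> Nset y''" using Nsame_Nset[OF ns''] Nsame_Nset[OF ns'] lN y' by simp
              then have "\<not> Nset y'' \<subseteq> {i}" using li by auto
              then show "a y'' p = (\<lambda>y p. 0) y'' p" using Ci_supp[OF a vy''] by auto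
            qed
            then show "Dd i a y' p = (\<lambda>y p. 0) y' p" using y' by (simp add: Dd_zero_fun)
          qed
          then show ?thesis using y by (simp add: Dd_zero_fun)
        qed
      qed
    qed
  qed
  show "Delta f (dhat i a) x p = 0" unfolding Delta_Gm dhat_Dd by (simp add: Gm_zero_at D0)
qed


lemma sum_single_nz:
  fixes g :: "'n::finite \<Rightarrow> real"
  assumes "\<And>l. l \<noteq> i \<Longrightarrow> g l = 0"
  shows "(\<Sum>l\<in>UNIV. g l) = g i"
proof -
  have "(\<Sum>l\<in>UNIV. g l) = g i + (\<Sum>l\<in>UNIV - {i}. g l)" by (simp add: sum.remove)
  also have "(\<Sum>l\<in>UNIV - {i}. g l) = 0" using assms by (intro sum.neutral) auto
  finally show ?thesis by simp
qed

lemma part4: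
  fixes f :: "'n::{finite,linorder} \<Rightarrow> (real,'n) vec \<Rightarrow> real"
  assumes a6: "\<And>i p. p \<in> U \<Longrightarrow> f i p \<noteq> 0"
    and c: "c \<in> Clam U" and a: "\<And>i. a i \<in> Ci U i" and B: "B \<in> Alam U"
    and eq: "(\<lambda>x p. c x p + (\<Sum>i\<in>UNIV. dhat i (a i) x p)) = Delta f B"
  shows "c = (\<lambda>x p. 0) \<and> (\<forall>i. dhat i (a i) = (\<lambda>x p. 0))"
proof -
  have E: "c x p + (\<Sum>i\<in>UNIV. Dd i (a i) x p) = Delta f B x p" for x p
    using fun_cong[OF fun_cong[OF eq, of x], of p] by (simp add: dhat_Dd)
  have invc: "invz c" using Clam_Alam[OF c] by (simp add: Alam_iff)
  have inva: "invz (a i)" for i using Ci_Alam[OF a] by (simp add: Alam_iff)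
  have SMa: "SM U (a i)" for i using Ci_Alam[OF a] by (simp add: Alam_iff)
  obtain NB where bB: "lamb NB B" using B by (auto simp: Alam_iff)
  have sumzero: "(\<Sum>i\<in>UNIV. Dd i (a i) (k,M,T) p) = 0" if "k \<noteq> 0" for k M T p
    using Dd_a_lam[OF a that] by simp
  have c0: "c x p = 0" for x p
  proof (rule ccontr)
    assume ne: "c x p \<noteq> 0"
    obtain k M T where x: "x = (k,M,T)" by (cases x)
    have v: "valid_mono (k,M,T)" using ne invc x unfolding invz_def by blast
    have fT: "finite T" using v by (simp add: valid_mono_def)
    have N: "Nset (k,M,T) = {}" using Clam_supp[OF c ne] x by simp
    have "Dd i (a i) (k,M,T) p = 0" for i
      using N Dd_zero[OF fT] by (auto simp: Nset_def)
    moreover have "Delta f B (k,M,T) p = 0" unfolding Delta_sum_Nset[OF v] N by simp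
    ultimately have "c x p = 0" using E[of x p] x by simp
    then show False using ne by simp
  qed
  have d0: "Dd i (a i) x p = 0" for i x p
  proof -
    obtain k M T where x: "x = (k,M,T)" by (cases x)
    show ?thesis
    proof (cases "valid_mono (k,M,T) \<and> p \<in> U \<and> Nset (k,M,T) = {i} \<and> k = 0")
      case False
      then consider "\<not> valid_mono (k,M,T)" | "p \<notin> U" | "valid_mono (k,M,T)" "Nset (k,M,T) \<noteq> {i}" | "k \<noteq> 0" by metis
      then show ?thesis
      proof cases
        case 1 then show ?thesis using invz_Dd[OF inva] x unfolding invz_def by blast
      next
        case 2
        have "a i y p = 0" for y using SMa[of i] 2 unfolding SM_def by blast
        then show ?thesis by (rule Dd_zero_at)
      next
        case 3 then show ?thesis using Dd_a_out[OF a] x by simp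
      next
        case 4 then show ?thesis using Dd_a_lam[OF a] x by simp
      qed
    next
      case True
      then have v: "valid_mono (0,M,T)" and pU: "p \<in> U" and S: "Nset (0,M,T) = {i}" and k0: "k = 0" by auto
      have fp: "f i p \<noteq> 0" using a6 pU by simp
      define W where "W j = Dd i B (j,M,T) p" for j
      have W0: "W j = 0" if "NB < j" for j
        using lamb_Dd[OF bB, of i] that unfolding lamb_def W_def by simp
      have Wrec: "W j = p $ i * W (Suc j)" for j
      proof -
        have vj: "valid_mono (Suc j, M, T)" using v valid_k[of "Suc j" M T 0] by simp
        have Sj: "Nset (Suc j, M, T) = {i}" using S Nset_k[of "Suc j" M T 0] by simp
        have "Delta f B (Suc j, M, T) p = c (Suc j, M, T) p + (\<Sum>i\<in>UNIV. Dd i (a i) (Suc j, M, T) p)"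
          using E by simp
        also have "\<dots> = 0" using c0 sumzero[of "Suc j"] by simp
        finally have "0 = Delta f B (Suc j, M, T) p" by simp
        also have "\<dots> = Gm f i (Dd i B) (Suc j, M, T) p" unfolding Delta_sum_Nset[OF vj] Sj by simp
        also have "\<dots> = f i p * (p $ i * W (Suc j) - W j)" by (simp add: Gm_def W_def algebra_simps)
        finally have "f i p * (p $ i * W (Suc j) - W j) = 0" by simp
        then have "p $ i * W (Suc j) - W j = 0" using fp by simp
        then show ?thesis by simp
      qed
      have W00: "W 0 = 0" by (rule lam_zero[of NB W "p $ i" 0, OF W0 Wrec])
      have "(\<Sum>l\<in>UNIV. Dd l (a l) (0,M,T) p) = Dd i (a i) (0,M,T) p"
        by (rule sum_single_nz) (use Dd_a_out[OF a v] S in auto)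
      then have "Dd i (a i) (0,M,T) p = Delta f B (0,M,T) p" using E[of "(0,M,T)" p] c0 by simp
      also have "\<dots> = Gm f i (Dd i B) (0,M,T) p" unfolding Delta_sum_Nset[OF v] S by simp
      also have "\<dots> = 0" using W00 by (simp add: Gm_def W_def)
      finally show ?thesis using x k0 by simp
    qed
  qed
  show ?thesis using c0 d0 by (auto simp: fun_eq_iff dhat_Dd)
qed


lemma invz_cmul: "invz F \<Longrightarrow> invz (\<lambda>y p. g p * F y p)" by (simp add: invz_def)
lemma invz_add: "invz F \<Longrightarrow> invz G \<Longrightarrow> invz (\<lambda>y p. F y p + G y p)" by (simp add: invz_def)
lemma invz_sum: "(\<And>j. j \<in> J \<Longrightarrow> invz (F j)) \<Longrightarrow> invz (\<lambda>y p. \<Sum>j\<in>J. F j y p)" by (simp add: invz_def)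
lemma suppS_cmul: "suppS S F \<Longrightarrow> suppS S (\<lambda>y p. g p * F y p)" by (simp add: suppS_def)
lemma suppS_add: "suppS S F \<Longrightarrow> suppS S G \<Longrightarrow> suppS S (\<lambda>y p. F y p + G y p)" by (simp add: suppS_def)
lemma lamb_cmul: "lamb N F \<Longrightarrow> lamb N (\<lambda>y p. g p * F y p)" by (simp add: lamb_def)
lemma lamb_add: "lamb N F \<Longrightarrow> lamb N G \<Longrightarrow> lamb N (\<lambda>y p. F y p + G y p)" by (simp add: lamb_def)
lemma lamb_sum: "(\<And>j. j \<in> J \<Longrightarrow> lamb N (F j)) \<Longrightarrow> lamb N (\<lambda>y p. \<Sum>j\<in>J. F j y p)" by (simp add: lamb_def)

lemma Dd_Proj:
  assumes v: "valid_mono (k,M,T)"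
  shows "Dd l (Proj S F) (k,M,T) p = (if Nset (k,M,T) = S then Dd l F (k,M,T) p else 0)"
proof -
  have e: "Proj S F = (\<lambda>y p. (if Nset y = S then 1 else 0) * F y p)" by (auto simp: Proj_def fun_eq_iff)
  have "Dd l (\<lambda>y p. (if Nset y = S then 1 else 0) * F y p) (k,M,T) p = (if Nset (k,M,T) = S then 1 else 0) * Dd l F (k,M,T) p"
    by (rule Dd_scaleN[OF v]) (simp add: Nsame_Nset)
  then show ?thesis unfolding e by simp
qed

lemma Delta_Proj:
  assumes v: "valid_mono (k,M,T)"
  shows "Delta f (Proj S F) (k,M,T) p = (if Nset (k,M,T) = S then Delta f F (k,M,T) p else 0)"
proof -
  have v': "valid_mono (k - 1, M, T)" using v valid_k[of "k - 1" M T k] by simp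
  have N': "Nset (k - 1, M, T) = Nset (k,M,T)" by (rule Nset_k)
  have "Gm f l (Dd l (Proj S F)) (k,M,T) p = (if Nset (k,M,T) = S then Gm f l (Dd l F) (k,M,T) p else 0)" for l
    unfolding Gm_def using Dd_Proj[OF v, of l S F p] Dd_Proj[OF v', of l S F p] N' by simp
  then show ?thesis unfolding Delta_Gm by simp
qed

lemma card2:
  assumes "2 \<le> card (S::'a set)"
  shows "(SOME m. m \<in> S) \<in> S \<and> (SOME m. m \<in> S \<and> m \<noteq> (SOME m. m \<in> S)) \<in> S
     \<and> (SOME m. m \<in> S \<and> m \<noteq> (SOME m. m \<in> S)) \<noteq> (SOME m. m \<in> S)"
proof -
  have ne: "S \<noteq> {}" using assms by auto
  then have m1: "(SOME m. m \<in> S) \<in> S" by (simp add: some_in_eq)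
  have "\<exists>m. m \<in> S \<and> m \<noteq> (SOME m. m \<in> S)"
  proof (rule ccontr)
    assume "\<not> ?thesis"
    then have "S \<subseteq> {SOME m. m \<in> S}" by auto
    then have "card S \<le> card {SOME m. m \<in> S}" by (intro card_mono) auto
    then have "card S \<le> 1" by simp
    then show False using assms by simp
  qed
  then have "(SOME m. m \<in> S \<and> m \<noteq> (SOME m. m \<in> S)) \<in> S \<and> (SOME m. m \<in> S \<and> m \<noteq> (SOME m. m \<in> S)) \<noteq> (SOME m. m \<in> S)"
    by (rule someI_ex)
  then show ?thesis using m1 by blast
qed

lemma card_ge2:
  fixes S :: "'n::finite set"
  assumes "S \<noteq> {}" "\<And>i. S \<noteq> {i}"
  shows "2 \<le> card S"
proof (rule ccontr)
  assume "\<not> 2 \<le> card S"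
  then have "card S = 0 \<or> card S = 1" by arith
  then show False
  proof
    assume "card S = 0" then show False using assms(1) by (simp add: finite)
  next
    assume "card S = 1" then obtain i where "S = {i}" by (rule card_1_singletonE)
    then show False using assms(2) by blast
  qed
qed


lemma final_alg:
  fixes u1 u2 f1 f2 z t :: real
  assumes "u1 \<noteq> u2" "f1 \<noteq> 0" "f2 \<noteq> 0"
  shows "inverse ((u1 - u2) * f1) * (u1 * f1 * z - f1 * t) + - inverse ((u1 - u2) * f2) * (u2 * f2 * z - f2 * t) = z"
proof -
  have d: "u1 - u2 \<noteq> 0" using assms(1) by simp
  have "inverse ((u1 - u2) * f1) * (u1 * f1 * z - f1 * t) = (u1 * z - t) / (u1 - u2)"
    using d assms(2) by (simp add: field_simps)
  moreover have "inverse ((u1 - u2) * f2) * (u2 * f2 * z - f2 * t) = (u2 * z - t) / (u1 - u2)"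
    using d assms(3) by (simp add: field_simps)
  moreover have "(u1 * z - t) / (u1 - u2) - (u2 * z - t) / (u1 - u2) = z"
  proof -
    have "(u1 * z - t) - (u2 * z - t) = (u1 - u2) * z" by algebra
    then have "(u1 * z - t) / (u1 - u2) - (u2 * z - t) / (u1 - u2) = ((u1 - u2) * z) / (u1 - u2)"
      by (simp add: diff_divide_distrib[symmetric])
    then show ?thesis using d by simp
  qed
  ultimately show ?thesis by simp
qed

lemma part3:
  fixes U :: "(real,'n::{finite,linorder}) vec set" and f :: "'n \<Rightarrow> (real,'n) vec \<Rightarrow> real"
  assumes oU: "open U" and a4: "\<And>i j p. i \<noteq> j \<Longrightarrow> p \<in> U \<Longrightarrow> p $ i \<noteq> p $ j"
    and a5: "\<And>i. smooth_on U (f i)" and a6: "\<And>i p. p \<in> U \<Longrightarrow> f i p \<noteq> 0"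
    and Z: "Z \<in> Alam U" and DZ: "Delta f Z = (\<lambda>x p. 0)"
  shows "\<exists>c\<in>Clam U. \<exists>a. (\<forall>i. a i \<in> Ci U i) \<and> (\<exists>B\<in>Alam U.
             Z = (\<lambda>x p. c x p + (\<Sum>i\<in>UNIV. dhat i (a i) x p) + Delta f B x p))"
proof -
  obtain Nb where bd: "lamb Nb Z" using Z by (auto simp: Alam_iff)
  have SMZ: "SM U Z" and invZ: "invz Z" using Z by (auto simp: Alam_iff)
  have DZ': "Delta f Z y p = 0" for y p using DZ by simp
  define PP where "PP S = Proj S Z" for S
  define Y where "Y i = Kk i (PP {i})" for i
  define c where "c = PP {}"
  define a where "a i = evl i Nb (Y i)" for i
  define m1 where "m1 S = (SOME m. m \<in> S)" for S :: "'n set"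
  define m2 where "m2 S = (SOME m. m \<in> S \<and> m \<noteq> m1 S)" for S :: "'n set"
  define c1 where "c1 S p = inverse ((p $ m1 S - p $ m2 S) * f (m1 S) p)" for S p
  define c2 where "c2 S p = - inverse ((p $ m1 S - p $ m2 S) * f (m2 S) p)" for S p
  define HB where "HB S = (\<lambda>y p. c1 S p * Kk (m1 S) (PP S) y p + c2 S p * Kk (m2 S) (PP S) y p)" for S
  define Qf where "Qf i = (\<lambda>y p. inverse (f i p) * Qd i Nb (Y i) y p)" for i
  define Ss where "Ss = {S :: 'n set. 2 \<le> card S}"
  define B where "B = (\<lambda>y p. (\<Sum>i\<in>UNIV. Qf i y p) + (\<Sum>S\<in>Ss. HB S y p))"
  have m12: "m1 S \<in> S \<and> m2 S \<in> S \<and> m1 S \<noteq> m2 S" if "S \<in> Ss" for S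
    using card2[of S] that unfolding Ss_def m1_def m2_def by auto
  have SMP: "SM U (PP S)" for S unfolding PP_def by (rule SM_Proj[OF SMZ oU])
  have invP: "invz (PP S)" for S unfolding PP_def by (rule invz_Proj[OF invZ])
  have lbP: "lamb Nb (PP S)" for S unfolding PP_def by (rule lamb_Proj[OF bd])
  have spP: "suppS S (PP S)" for S unfolding PP_def by (rule suppS_Proj)
  have SMY: "SM U (Y i)" for i unfolding Y_def by (rule SM_Kk[OF SMP oU])
  have invY: "invz (Y i)" for i unfolding Y_def by (rule invz_Kk[OF invP])
  have lbY: "lamb Nb (Y i)" for i unfolding Y_def by (rule lamb_Kk[OF lbP])
  have spY: "suppS {i} (Y i)" for i unfolding Y_def by (rule suppS_Kk[OF spP])
  have SMa: "SM U (a i)" for i unfolding a_def by (rule SM_evl[OF SMY oU])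
  have inva: "invz (a i)" for i unfolding a_def by (rule invz_evl[OF invY])
  have spa: "suppS {i} (a i)" for i unfolding a_def by (rule suppS_evl[OF spY])
  have SMQ: "SM U (Qf i)" for i unfolding Qf_def
    by (rule SM_cmul[OF SM_Qd[OF SMY oU] oU]) (rule smooth_inverse[OF oU a5 a6])
  have invQ: "invz (Qf i)" for i unfolding Qf_def by (rule invz_cmul[OF invz_Qd[OF invY]])
  have lbQ: "lamb Nb (Qf i)" for i unfolding Qf_def by (rule lamb_cmul[OF lamb_Qd])
  have spQ: "suppS {i} (Qf i)" for i unfolding Qf_def by (rule suppS_cmul[OF suppS_Qd[OF spY]])
  have SMH: "SM U (HB S)" if "S \<in> Ss" for S
  proof -
    have ne: "p $ m1 S - p $ m2 S \<noteq> 0" if "p \<in> U" for p using a4[of "m1 S" "m2 S" p] m12[OF \<open>S \<in> Ss\<close>] that by simp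
    have s1: "smooth_on U (c1 S)" unfolding c1_def[abs_def]
      by (intro smooth_inverse smooth_mult smooth_diff smooth_coord oU a5) (use ne a6 in auto)
    have s2: "smooth_on U (c2 S)"
    proof -
      have "smooth_on U (\<lambda>p. (-1) * inverse ((p $ m1 S - p $ m2 S) * f (m2 S) p))"
        by (intro smooth_mult smooth_const smooth_inverse smooth_diff smooth_coord oU a5) (use ne a6 in auto)
      then show ?thesis unfolding c2_def[abs_def] by simp
    qed
    show ?thesis unfolding HB_def
      by (intro SM_add SM_cmul SM_Kk SMP oU s1 s2)
  qed
  have invH: "invz (HB S)" for S unfolding HB_def by (intro invz_add invz_cmul invz_Kk invP)
  have lbH: "lamb Nb (HB S)" for S unfolding HB_def by (intro lamb_add lamb_cmul lamb_Kk lbP)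
  have spH: "suppS S (HB S)" for S unfolding HB_def by (intro suppS_add suppS_cmul suppS_Kk spP)
  have BA: "B \<in> Alam U"
    unfolding Alam_iff
  proof (intro conjI exI)
    show "SM U B" unfolding B_def by (intro SM_add SM_sum SMQ SMH oU) (simp_all add: Ss_def)
    show "invz B" unfolding B_def by (intro invz_add invz_sum invQ invH)
    show "lamb Nb B" unfolding B_def by (intro lamb_add lamb_sum lbQ lbH)
  qed
  have cC: "c \<in> Clam U"
    unfolding Clam_def
  proof (intro CollectI conjI allI impI)
    show "c \<in> Alam U" unfolding Alam_iff c_def using SMP invP lbP by blast
    fix x assume ne: "c x \<noteq> (\<lambda>p. 0)"
    then obtain p where cp: "c x p \<noteq> 0" by auto
    have v: "valid_mono x" using cp invP unfolding c_def invz_def by blast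
    have N: "Nset x = {}" using cp spP[of "{}"] v unfolding c_def suppS_def by blast
    have ch: "(\<forall>s. 1 \<le> s \<longrightarrow> (j,s) \<notin># mev x) \<and> (\<forall>s. 2 \<le> s \<longrightarrow> (j,s) \<notin> mth x)" for j
      using Nset_char[OF v, of j] N by simp
    have "\<forall>w\<in>#mev x. 1 \<le> snd w" using v by (simp add: valid_mono_def)
    then show "mev x = {#}" using ch by (metis multiset_nonemptyE prod.collapse)
    show "mth x \<subseteq> {v. snd v \<le> 1}"
    proof
      fix w assume wx: "w \<in> mth x"
      obtain j r where w: "w = (j,r)" by (cases w)
      have "\<not> 2 \<le> r" using ch[of j] wx w by auto
      then show "w \<in> {v. snd v \<le> 1}" using w by simp
    qed
  qed
  have aC: "a i \<in> Ci U i" for i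
    unfolding Ci_def
  proof (intro CollectI conjI allI impI)
    show "a i \<in> Alam U" unfolding Alam_iff using SMa inva lamb_evl[of i Nb "Y i"] by (auto simp: a_def)
    fix x assume ne: "a i x \<noteq> (\<lambda>p. 0)"
    then obtain p where ap: "a i x p \<noteq> 0" by auto
    show "mlam x = 0" using ap by (auto simp: a_def evl_def split: if_splits)
    have v: "valid_mono x" using ap inva unfolding invz_def by blast
    have N: "Nset x = {i}" using ap spa[of i] v unfolding suppS_def by blast
    have ch: "j \<noteq> i \<Longrightarrow> (\<forall>s. 1 \<le> s \<longrightarrow> (j,s) \<notin># mev x) \<and> (\<forall>s. 2 \<le> s \<longrightarrow> (j,s) \<notin> mth x)" for j
      using Nset_char[OF v, of j] N by simp
    have vs: "\<forall>w\<in>#mev x. 1 \<le> snd w" using v by (simp add: valid_mono_def)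
    show "\<forall>w\<in>#mev x. fst w = i"
    proof
      fix w assume w: "w \<in># mev x"
      show "fst w = i"
      proof (rule ccontr)
        assume "fst w \<noteq> i"
        then show False using ch[of "fst w"] w vs by (cases w) auto
      qed
    qed
    show "mth x \<subseteq> {v. snd v \<le> 1} \<union> {v. fst v = i \<and> 2 \<le> snd v}"
    proof
      fix w assume w: "w \<in> mth x"
      show "w \<in> {v. snd v \<le> 1} \<union> {v. fst v = i \<and> 2 \<le> snd v}"
      proof (cases "fst w = i")
        case True then show ?thesis by auto
      next
        case False
        obtain j r where w': "w = (j,r)" by (cases w)
        have "\<not> 2 \<le> r" using ch[of j] w w' False by auto
        then show ?thesis using w' by simp
      qed
    qed
  qed
  have SMB: "SM U B" and invB: "invz B" using BA by (auto simp: Alam_iff)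
  have EQ: "Z x p = c x p + (\<Sum>i\<in>UNIV. Dd i (a i) x p) + Delta f B x p" for x p
  proof -
    obtain k M T where x: "x = (k,M,T)" by (cases x)
    show ?thesis
    proof (cases "p \<in> U")
      case False
      have z: "Z x p = 0" using SMZ False unfolding SM_def by blast
      have cz: "c x p = 0" using SMP[of "{}"] False unfolding SM_def c_def by blast
      have az: "Dd i (a i) x p = 0" for i
        by (rule Dd_zero_at) (use SMa[of i] False in \<open>unfold SM_def, blast\<close>)
      have bz: "Dd l B y p = 0" for l y
        by (rule Dd_zero_at) (use SMB False in \<open>unfold SM_def, blast\<close>)
      have "Delta f B x p = 0" unfolding Delta_Gm by (simp add: Gm_zero_at bz)
      then show ?thesis using z cz az by simp
    next
      case pU: True
      have fp: "f j p \<noteq> 0" for j using a6 pU by simp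
      show ?thesis
      proof (cases "valid_mono (k,M,T)")
        case False
        have z: "Z x p = 0" using invZ False x unfolding invz_def by blast
        have cz: "c x p = 0" using invP[of "{}"] False x unfolding invz_def c_def by blast
        have az: "Dd i (a i) x p = 0" for i using invz_Dd[OF inva] False x unfolding invz_def by blast
        have F': "\<not> valid_mono (k - 1, M, T)" using False valid_k[of "k - 1" M T k] by simp
        have bz: "Dd l B (k,M,T) p = 0" "Dd l B (k - 1,M,T) p = 0" for l
          using invz_Dd[OF invB, of l] False F' unfolding invz_def by blast+
        have "Gm f l (Dd l B) (k,M,T) p = 0" for l unfolding Gm_def mono_sel bz by simp
        then have "Delta f B x p = 0" unfolding Delta_Gm x by simp
        then show ?thesis using z cz az by simp
      next
        case v: True
        define S0 where "S0 = Nset (k,M,T)"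
        have vk: "valid_mono (k',M,T)" for k' using v valid_k[of k' M T k] by simp
        have Nk: "Nset (k',M,T) = S0" for k' using Nset_k[of k' M T k] by (simp add: S0_def)
        have DdB: "Dd l B y p = (\<Sum>i\<in>UNIV. Dd l (Qf i) y p) + (\<Sum>S\<in>Ss. Dd l (HB S) y p)" for l y
          unfolding B_def Dd_add Dd_sum by simp
        have Qout: "Dd l (Qf i) (k',M,T) p = 0" if "S0 \<noteq> {i}" for l i k'
          by (rule Dd_out[OF vk _ spQ]) (use that Nk in simp)
        have Hout: "Dd l (HB S) (k',M,T) p = 0" if "S \<noteq> S0" for l S k'
          by (rule Dd_out[OF vk _ spH]) (use that Nk in simp)
        have aout: "Dd l (a l) (k,M,T) p = 0" if "S0 \<noteq> {l}" for l
          by (rule Dd_out[OF v _ spa]) (use that in \<open>simp add: S0_def\<close>)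
        consider (E) "S0 = {}" | (I) i where "S0 = {i}" | (G) "S0 \<noteq> {}" "\<And>i. S0 \<noteq> {i}" by blast
        then show ?thesis
        proof cases
          case E
          have "c x p = Z x p" using E x by (simp add: c_def PP_def Proj_def S0_def)
          moreover have "(\<Sum>i\<in>UNIV. Dd i (a i) x p) = 0" using aout E x by simp
          moreover have "Delta f B x p = 0" unfolding x Delta_sum_Nset[OF v] S0_def[symmetric] E by simp
          ultimately show ?thesis by simp
        next
          case (I i)
          have c0: "c x p = 0" using I x by (simp add: c_def PP_def Proj_def S0_def)
          have sa: "(\<Sum>l\<in>UNIV. Dd l (a l) x p) = Dd i (a i) x p"
            by (rule sum_single_nz) (use aout I x in auto)
          have DB: "Delta f B x p = Gm f i (Dd i B) (k,M,T) p"
            unfolding x Delta_sum_Nset[OF v] S0_def[symmetric] I by simp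
          have DBi: "Dd i B (k',M,T) p = Dd i (Qf i) (k',M,T) p" for k'
          proof -
            have "(\<Sum>j\<in>UNIV. Dd i (Qf j) (k',M,T) p) = Dd i (Qf i) (k',M,T) p"
              by (rule sum_single_nz) (use Qout I in auto)
            moreover have "(\<Sum>S\<in>Ss. Dd i (HB S) (k',M,T) p) = 0"
            proof (rule sum.neutral, intro ballI)
              fix S assume "S \<in> Ss"
              then have "S \<noteq> S0" using I by (auto simp: Ss_def)
              then show "Dd i (HB S) (k',M,T) p = 0" by (rule Hout)
            qed
            ultimately show ?thesis using DdB by simp
          qed
          have G1: "Gm f i (Dd i B) (k,M,T) p = Gm f i (Dd i (Qf i)) (k,M,T) p"
            by (rule Gm_cong) (simp_all only: DBi)
          have DP0: "Dd i (PP {i}) y p = 0" if vy: "valid_mono y" for y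
          proof -
            obtain k' M' T' where y: "y = (k',M',T')" by (cases y)
            show ?thesis
            proof (cases "Nset y = {i}")
              case True
              then show ?thesis using Dd_Proj[of k' M' T' i "{i}" Z p] vy y cocycle[of k' M' T' i f p Z Nb] fp DZ' bd
                by (simp add: PP_def)
            next
              case False
              then show ?thesis using Dd_Proj[of k' M' T' i "{i}" Z p] vy y by (simp add: PP_def)
            qed
          qed
          have Yb: "Kk i (PP {i}) (j,M',T') p = 0" if "Nb < j" for j M' T'
            using lbY[of i] that unfolding lamb_def Y_def by simp
          have sing: "Gm f i (Dd i (Qf i)) (k,M,T) p = PP {i} (k,M,T) p - Dd i (a i) (k,M,T) p"
            unfolding Qf_def a_def Y_def
          proof (rule singleton[where f=f and i=i and P="PP {i}" and Nb=Nb])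
            show "valid_mono (k,M,T)" by (rule v)
            show "Nset (k,M,T) = {i}" using I S0_def by simp
            show "f i p \<noteq> 0" by (rule fp)
            show "\<And>y. valid_mono y \<Longrightarrow> Dd i (PP {i}) y p = 0" by (rule DP0)
            show "\<And>j M T. Nb < j \<Longrightarrow> Kk i (PP {i}) (j, M, T) p = 0" by (rule Yb)
          qed
          have "PP {i} (k,M,T) p = Z (k,M,T) p" using I by (simp add: PP_def Proj_def S0_def)
          then show ?thesis using c0 sa DB G1 sing x by simp
        next
          case G
          have S0Ss: "S0 \<in> Ss" using card_ge2[OF G] by (simp add: Ss_def)
          have c0: "c x p = 0" using G x by (simp add: c_def PP_def Proj_def S0_def)
          have sa: "(\<Sum>l\<in>UNIV. Dd l (a l) x p) = 0" using aout G x by simp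
          have DBl: "Dd l B (k',M,T) p = Dd l (HB S0) (k',M,T) p" for l k'
          proof -
            have "(\<Sum>j\<in>UNIV. Dd l (Qf j) (k',M,T) p) = 0"
              by (rule sum.neutral) (use Qout G in auto)
            moreover have "(\<Sum>S\<in>Ss. Dd l (HB S) (k',M,T) p) = Dd l (HB S0) (k',M,T) p"
            proof -
              have "(\<Sum>S\<in>Ss. Dd l (HB S) (k',M,T) p) = Dd l (HB S0) (k',M,T) p + (\<Sum>S\<in>Ss - {S0}. Dd l (HB S) (k',M,T) p)"
                using S0Ss by (simp add: sum.remove)
              also have "(\<Sum>S\<in>Ss - {S0}. Dd l (HB S) (k',M,T) p) = 0"
                by (rule sum.neutral) (use Hout in auto)
              finally show ?thesis by simp
            qed
            ultimately show ?thesis using DdB by simp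
          qed
          have DPS: "Delta f (PP S0) y p = 0" if vy: "valid_mono y" for y
          proof -
            obtain k' M' T' where y: "y = (k',M',T')" by (cases y)
            show ?thesis using Delta_Proj[of k' M' T' f S0 Z p] vy y DZ' by (simp add: PP_def)
          qed
          have m: "m1 S0 \<in> S0" "m2 S0 \<in> S0" "m1 S0 \<noteq> m2 S0" using m12[OF S0Ss] by auto
          have "Delta f B x p = (\<Sum>l\<in>UNIV. Gm f l (Dd l (HB S0)) (k,M,T) p)"
            unfolding x Delta_Gm by (intro sum.cong refl Gm_cong) (simp_all only: DBl)
          also have "\<dots> = c1 S0 p * Gm f (m1 S0) (PP S0) (k,M,T) p + c2 S0 p * Gm f (m2 S0) (PP S0) (k,M,T) p"
            unfolding HB_def by (rule homotopy[OF v S0_def[symmetric] m(1) m(2)]) (rule DPS)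
          finally have DBf0: "Delta f B x p = c1 S0 p * Gm f (m1 S0) (PP S0) (k,M,T) p + c2 S0 p * Gm f (m2 S0) (PP S0) (k,M,T) p" .
          have GZ: "Gm f j (PP S0) (k,M,T) p = Gm f j Z (k,M,T) p" for j
            by (rule Gm_cong) (simp_all add: PP_def Proj_def Nk)
          have DBf: "Delta f B x p = c1 S0 p * Gm f (m1 S0) Z (k,M,T) p + c2 S0 p * Gm f (m2 S0) Z (k,M,T) p"
            using DBf0 unfolding GZ .
          define t where "t = (if k = 0 then 0 else Z (k - 1, M, T) p)"
          have gm: "Gm f j Z (k,M,T) p = p $ j * f j p * Z (k,M,T) p - f j p * t" for j
            by (simp add: Gm_def t_def)
          have "Delta f B x p = Z (k,M,T) p"
            unfolding DBf gm c1_def c2_def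
            by (rule final_alg) (use a4[OF m(3) pU] fp in auto)
          then show ?thesis using c0 sa x by simp
        qed
      qed
    qed
  qed
  show ?thesis
  proof (intro bexI exI conjI allI)
    show "Z = (\<lambda>x p. c x p + (\<Sum>i\<in>UNIV. dhat i (a i) x p) + Delta f B x p)"
      using EQ by (simp add: fun_eq_iff dhat_Dd)
  qed (use cC aC BA in auto)
qed


theorem proposition3p1:
  fixes U :: "(real,'n::{finite,linorder}) vec set"
    and f :: "'n \<Rightarrow> (real,'n) vec \<Rightarrow> real"
  assumes "open U" and "connected U" and "U \<noteq> {}"
    and "\<And>i j p. i \<noteq> j \<Longrightarrow> p \<in> U \<Longrightarrow> p $ i \<noteq> p $ j"
    and "\<And>i. smooth_on U (f i)"
    and "\<And>i p. p \<in> U \<Longrightarrow> f i p \<noteq> 0"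
  shows
    "(\<forall>c\<in>Clam U. Delta f c = (\<lambda>x p. 0))
     \<and> (\<forall>i. \<forall>a\<in>Ci U i. Delta f (dhat i a) = (\<lambda>x p. 0))
     \<and> (\<forall>Z\<in>Alam U. Delta f Z = (\<lambda>x p. 0) \<longrightarrow>
          (\<exists>c\<in>Clam U. \<exists>a. (\<forall>i. a i \<in> Ci U i) \<and> (\<exists>B\<in>Alam U.
             Z = (\<lambda>x p. c x p + (\<Sum>i\<in>UNIV. dhat i (a i) x p) + Delta f B x p))))
     \<and> (\<forall>c\<in>Clam U. \<forall>a. (\<forall>i. a i \<in> Ci U i) \<longrightarrow>
          (\<exists>B\<in>Alam U. (\<lambda>x p. c x p + (\<Sum>i\<in>UNIV. dhat i (a i) x p)) = Delta f B) \<longrightarrow>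
          c = (\<lambda>x p. 0) \<and> (\<forall>i. dhat i (a i) = (\<lambda>x p. 0)))"
  proof -
  have 1: "\<forall>c\<in>Clam U. Delta f c = (\<lambda>x p. 0)" using part1 by blast
  have 2: "\<forall>i. \<forall>a\<in>Ci U i. Delta f (dhat i a) = (\<lambda>x p. 0)" using part2 by blast
  have 3: "\<forall>Z\<in>Alam U. Delta f Z = (\<lambda>x p. 0) \<longrightarrow>
          (\<exists>c\<in>Clam U. \<exists>a. (\<forall>i. a i \<in> Ci U i) \<and> (\<exists>B\<in>Alam U.
             Z = (\<lambda>x p. c x p + (\<Sum>i\<in>UNIV. dhat i (a i) x p) + Delta f B x p)))"
  proof (intro ballI impI)
    fix Z assume Z: "Z \<in> Alam U" and DZ: "Delta f Z = (\<lambda>x p. 0)"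
    show "\<exists>c\<in>Clam U. \<exists>a. (\<forall>i. a i \<in> Ci U i) \<and> (\<exists>B\<in>Alam U.
             Z = (\<lambda>x p. c x p + (\<Sum>i\<in>UNIV. dhat i (a i) x p) + Delta f B x p))"
    proof (rule part3)
      show "open U" by (rule assms(1))
      show "\<And>i j p. i \<noteq> j \<Longrightarrow> p \<in> U \<Longrightarrow> p $ i \<noteq> p $ j" by (rule assms(4))
      show "\<And>i. smooth_on U (f i)" by (rule assms(5))
      show "\<And>i p. p \<in> U \<Longrightarrow> f i p \<noteq> 0" by (rule assms(6))
      show "Z \<in> Alam U" by (rule Z)
      show "Delta f Z = (\<lambda>x p. 0)" by (rule DZ)
    qed
  qed
  have 4: "\<forall>c\<in>Clam U. \<forall>a. (\<forall>i. a i \<in> Ci U i) \<longrightarrow>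
          (\<exists>B\<in>Alam U. (\<lambda>x p. c x p + (\<Sum>i\<in>UNIV. dhat i (a i) x p)) = Delta f B) \<longrightarrow>
          c = (\<lambda>x p. 0) \<and> (\<forall>i. dhat i (a i) = (\<lambda>x p. 0))"
    using part4[of U f] assms(6) by blast
  show ?thesis using 1 2 3 4 by blast
qed

end
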